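(* Assume (H1)–(H4) below. Suppose that there is $\lambda_0>0$ such that for every $\lambda\ge\lambda_0$ the coupled Riccati equations, for $i\in\mathcal S$, $s\in[0,T]$ (coefficients at $(s,i)$), $$\begin{aligned}\dot{\mathcal P}_\lambda(s,i)&=-\mathcal P_\lambda(s,i)\widehat A-\widehat A^\top\mathcal P_\lambda(s,i)-G+\begin{pmatrix}\widetilde F^\top\mathcal P_\lambda(s,i)+\widetilde S_1\\\widehat H^\top\mathcal P_\lambda(s,i)+S_2\end{pmatrix}^{\!\top}\begin{pmatrix}\widetilde T_{11}+\mathcal P_\lambda(s,i)&0\\0&T_{22}\end{pmatrix}^{-1}\begin{pmatrix}\widetilde F^\top\mathcal P_\lambda(s,i)+\widetilde S_1\\\widehat H^\top\mathcal P_\lambda(s,i)+S_2\end{pmatrix}\\&\quad+\sum_{k=1}^D\lambda_{ik}(s)\mathcal P_\lambda(s,i)\mathcal P_\lambda(s,k)^{-1}\mathcal P_\lambda(s,i),\qquad\mathcal P_\lambda(T,i)=\lambda I,\end{aligned}$$ admit a solution $(\mathcal P_\lambda(\cdot,1),\dots,\mathcal P_\lambda(\cdot,D))$ with each $\mathcal P_\lambda(\cdot,i)\in C(0,T;\mathbb S^n_+)$ such that for every $i\in\mathcal S$: $\mathcal P_\lambda(\cdot,i)+\widetilde T_{11}(\cdot,i)\gg0$, and $\mathcal P_{\lambda_2}(\cdot,i)\ge\mathcal P_{\lambda_1}(\cdot,i)$ whenever $\lambda_2>\lambda_1\ge\lambda_0$. Then the coupled Riccati equations $$\dot\Sigma(s,i)=\widehat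 A\Sigma(s,i)+\Sigma(s,i)\widehat A^\top+\Sigma(s,i)G\Sigma(s,i)-\sum_{k=1}^D\lambda_{ik}(s)\Sigma(s,k)-\widehat{\mathcal F}(\Sigma(s,i))\widehat{\mathcal T}(\Sigma(s,i))^{-1}\Sigma(s,i)\widehat{\mathcal F}(\Sigma(s,i))^\top-\widehat{\mathcal H}(\Sigma(s,i))T_{22}^{-1}\widehat{\mathcal H}(\Sigma(s,i))^\top,\quad\Sigma(T,i)=0,$$ admit a solution $(\Sigma(\cdot,1),\dots,\Sigma(\cdot,D))$ with $\Sigma(\cdot,i)\in C(0,T;\overline{\mathbb S^n_+})$ and $\widehat{\mathcal T}(\Sigma(\cdot,i))^{-1}\in L^\infty(0,T;\mathbb R^{n\times n})$ for all $i\in\mathcal S$.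
   Context: Let $T>0$ and $(\Omega,\mathcal F,\mathbb P)$ a complete probability space carrying a one-dimensional standard Brownian motion $W$ and an independent continuous-time, finite-state, irreducible Markov chain $\alpha$ with state space $\mathcal S=\{1,\dots,D\}$ and deterministic generator $[\lambda_{ij}(t)]$ ($\lambda_{ij}(t)\ge0$ for $i\ne j$, $\sum_{j}\lambda_{ij}(t)=0$). $\mathbb F$ is the natural filtration of $(W,\alpha)$ augmented by all $\mathbb P$-null sets. $\mathbb S^n$ denotes symmetric $n\times n$ matrices, $\mathbb S^n_+$ the positive definite ones and $\overline{\mathbb S^n_+}$ the positive semidefinite ones; for an $\mathbb S^n$-valued function $F$ on $[0,T]$, $F\gg0$ means $F(s)\ge\delta I$ for a.e. $s$, for some $\delta>0$. $L^\infty(0,T;\mathbb H)$: essentially bounded deterministic functions; $L^2_{\mathbb F}(0,T;\mathbb H)$: $\mathbb F$-progressively measurable processes $\varphi$ with $\mathbb E\int_0^T|\varphi|^2ds<\infty$; $L^2_{\mathcal F_T}(\Omega;\mathbb H)$: square integrable $\mathcal F_T$-measurable random variables; $\mathcal U_k=L^2_{\mathbb F}(0,T;\mathbb R^{m_k})$, $k=1,2$. Game data. State equation: $dX=[A(s,\alpha)X+B_1(s,\alpha)u_1+B_2(s,\alpha)u_2+b(s)]ds+[C(s,\alpha)X+D_1(s,\alpha)u_1+D_2(s,\alpha)u_2+\sigma(s)]dW$, $X(0)=x$, $\alpha(0)=i$. Criterion: $J(x,i;u_1,u_2)=\mathbb E\{\int_0^T[\langle Q(s,\alpha(s))X,X\rangle+\sum_{k=1}^2\langle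 R_k(s,\alpha(s))u_k,u_k\rangle]ds+\langle M(T,\alpha(T))X(T),X(T)\rangle+2\langle m,X(T)\rangle\}$. $J^0$ denotes $J$ with $b=\sigma=0$, $m=0$. (H1) For each $i$: $A(\cdot,i),C(\cdot,i)\in L^\infty(0,T;\mathbb R^{n\times n})$, $B_k(\cdot,i),D_k(\cdot,i)\in L^\infty(0,T;\mathbb R^{n\times m_k})$, $b,\sigma\in L^2_{\mathbb F}(0,T;\mathbb R^n)$. (H2) For each $i$: $Q(\cdot,i)\in L^\infty(0,T;\mathbb S^n)$, $R_k(\cdot,i)\in L^\infty(0,T;\mathbb S^{m_k})$, $M(T,i)\in\mathbb S^n$, $m\in L^2_{\mathcal F_T}(\Omega;\mathbb R^n)$ (no definiteness assumed). (H3) There is $\lambda_F>0$ with $J^0(0,i;u_1,0)\ge\lambda_F\mathbb E\int_0^T|u_1|^2ds$ for all $u_1\in\mathcal U_1$, $i\in\mathcal S$. (H4) There is $\lambda_L>0$ with $J^0(0,i;0,u_2)\le-\lambda_L\mathbb E\int_0^T|u_2|^2ds$ for all $u_2\in\mathcal U_2$, $i\in\mathcal S$. Follower's Riccati solution (known fact taken as given): under (H1)–(H3), the coupled equations $\dot P(s,i)=-P(s,i)A(s,i)-A(s,i)^\top P(s,i)-C(s,i)^\top P(s,i)C(s,i)+\widehat S_1(s,i)^\top\widehat R_1(s,i)^{-1}\widehat S_1(s,i)-Q(s,i)-\sum_{k=1}^D\lambda_{ik}(s)P(s,k)$, $P(T,i)=M(T,i)$, $i\in\mathcal S$, have a unique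 solution with $P(\cdot,i)\in C(0,T;\mathbb S^n)$ and $\widehat R_1(\cdot,i)\gg0$ for all $i$, where $\widehat S_1=B_1^\top P+D_1^\top PC$, $\widehat R_1=R_1+D_1^\top PD_1$; $P$ denotes this solution. Derived coefficients (argument $(s,i)$): $\Xi=D_1^\top PD_2$; $\widehat A=\widehat S_1^\top\widehat R_1^{-1}B_1^\top-A^\top$; $\widehat C=\widehat S_1^\top\widehat R_1^{-1}D_1^\top-C^\top$; $\widehat H=\widehat CPD_2-PB_2$; $G=B_1\widehat R_1^{-1}B_1^\top$; $S_1=D_1\widehat R_1^{-1}B_1^\top$; $S_2=\Xi^\top\widehat R_1^{-1}B_1^\top-B_2^\top$; $T_{11}=D_1\widehat R_1^{-1}D_1^\top$; $T_{21}=T_{12}^\top=\Xi^\top\widehat R_1^{-1}D_1^\top-D_2^\top$; $T_{22}=\Xi^\top\widehat R_1^{-1}\Xi-R_2-D_2^\top PD_2$. Under (H1)–(H4), $T_{22}(\cdot,i)\gg0$ (established separately), so $T_{22}^{-1}$ exists and is bounded. Further: $\widetilde F=\widehat C-\widehat HT_{22}^{-1}T_{21}$; $\widetilde S_1=S_1-T_{12}T_{22}^{-1}S_2$; $\widetilde T_{11}=T_{11}-T_{12}T_{22}^{-1}T_{21}$; and for an $\mathbb S^n$-valued $\Sigma$: $\widehat{\mathcal T}(\Sigma(s,i))=I+\Sigma(s,i)\widetilde T_{11}(s,i)$, $\widehat{\mathcal F}(\Sigma(s,i))=\widetilde F(s,i)+\Sigma(s,i)\widetilde S_1(s,i)^\top$,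 $\widehat{\mathcal H}(\Sigma(s,i))=\widehat H(s,i)+\Sigma(s,i)S_2(s,i)^\top$. *)

theory Defs
  imports "HOL-Analysis.Analysis"
begin

definition symm :: "real^'n^'n \<Rightarrow> bool" where
  "symm M \<longleftrightarrow> transpose M = M"

text \<open>Positive definite (S^n_+) and positive semidefinite (closure of S^n_+) symmetric matrices.\<close>
definition posdef :: "real^'n^'n \<Rightarrow> bool" where
  "posdef M \<longleftrightarrow> symm M \<and> (\<forall>x. x \<noteq> 0 \<longrightarrow> 0 < x \<bullet> (M *v x))"

definition psd :: "real^'n^'n \<Rightarrow> bool" where
  "psd M \<longleftrightarrow> symm M \<and> (\<forall>x. 0 \<le> x \<bullet> (M *v x))"

definition Linf :: "real \<Rightarrow> (real \<Rightarrow> 'a::euclidean_space) \<Rightarrow> bool" where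
  "Linf T f \<longleftrightarrow> set_borel_measurable lborel {0..T} f \<and>
     (\<exists>B. AE s in lborel. s \<in> {0..T} \<longrightarrow> norm (f s) \<le> B)"

definition unif_pos :: "real \<Rightarrow> (real \<Rightarrow> real^'n^'n) \<Rightarrow> bool" where
  "unif_pos T F \<longleftrightarrow> (\<exists>\<delta>>0. AE s in lborel. s \<in> {0..T} \<longrightarrow>
     (\<forall>x. \<delta> * (x \<bullet> x) \<le> x \<bullet> (F s *v x)))"

text \<open>X is a (Caratheodory) solution on [0,T] of dX/ds = F(s), where F(s) is the
  right-hand side already evaluated along X: X is continuous, F is integrable on [0,T]
  and X(t) = X(T) - integral_t^T F for all t in [0,T] (i.e. X absolutely continuous
  with derivative F a.e.).\<close>
definition ode_solution :: "real \<Rightarrow> (real \<Rightarrow> 'a::euclidean_space) \<Rightarrow> (real \<Rightarrow> 'a) \<Rightarrow> bool" where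
  "ode_solution T X F \<longleftrightarrow> continuous_on {0..T} X \<and> set_integrable lborel {0..T} F \<and>
     (\<forall>t\<in>{0..T}. X t = X T - (LINT r:{t..T}|lborel. F r))"

record ('n::finite, 'm1::finite, 'm2::finite) coef =
  cA :: "real^'n^'n"
  cB1 :: "real^'m1^'n"
  cB2 :: "real^'m2^'n"
  cC :: "real^'n^'n"
  cD1 :: "real^'m1^'n"
  cD2 :: "real^'m2^'n"
  cR1 :: "real^'m1^'m1"
  cR2 :: "real^'m2^'m2"
  cP :: "real^'n^'n"

definition mk_coef where
  "mk_coef A B1 B2 C D1 D2 R1 R2 P s i =
     \<lparr>cA = A s i, cB1 = B1 s i, cB2 = B2 s i, cC = C s i, cD1 = D1 s i, cD2 = D2 s i,
      cR1 = R1 s i, cR2 = R2 s i, cP = P s i\<rparr>"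

definition S1hat :: "('n::finite,'m1::finite,'m2::finite) coef \<Rightarrow> real^'n^'m1" where
  "S1hat c = transpose (cB1 c) ** cP c + transpose (cD1 c) ** cP c ** cC c"

definition R1hat :: "('n::finite,'m1::finite,'m2::finite) coef \<Rightarrow> real^'m1^'m1" where
  "R1hat c = cR1 c + transpose (cD1 c) ** cP c ** cD1 c"

definition Xi :: "('n::finite,'m1::finite,'m2::finite) coef \<Rightarrow> real^'m2^'m1" where
  "Xi c = transpose (cD1 c) ** cP c ** cD2 c"

definition Ahat :: "('n::finite,'m1::finite,'m2::finite) coef \<Rightarrow> real^'n^'n" where
  "Ahat c = transpose (S1hat c) ** matrix_inv (R1hat c) ** transpose (cB1 c) - transpose (cA c)"

definition Chat :: "('n::finite,'m1::finite,'m2::finite) coef \<Rightarrow> real^'n^'n" where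
  "Chat c = transpose (S1hat c) ** matrix_inv (R1hat c) ** transpose (cD1 c) - transpose (cC c)"

definition Hhat :: "('n::finite,'m1::finite,'m2::finite) coef \<Rightarrow> real^'m2^'n" where
  "Hhat c = Chat c ** cP c ** cD2 c - cP c ** cB2 c"

definition Gm :: "('n::finite,'m1::finite,'m2::finite) coef \<Rightarrow> real^'n^'n" where
  "Gm c = cB1 c ** matrix_inv (R1hat c) ** transpose (cB1 c)"

definition Sm1 :: "('n::finite,'m1::finite,'m2::finite) coef \<Rightarrow> real^'n^'n" where
  "Sm1 c = cD1 c ** matrix_inv (R1hat c) ** transpose (cB1 c)"

definition Sm2 :: "('n::finite,'m1::finite,'m2::finite) coef \<Rightarrow> real^'n^'m2" where
  "Sm2 c = transpose (Xi c) ** matrix_inv (R1hat c) ** transpose (cB1 c) - transpose (cB2 c)"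

definition T11 :: "('n::finite,'m1::finite,'m2::finite) coef \<Rightarrow> real^'n^'n" where
  "T11 c = cD1 c ** matrix_inv (R1hat c) ** transpose (cD1 c)"

definition T21 :: "('n::finite,'m1::finite,'m2::finite) coef \<Rightarrow> real^'n^'m2" where
  "T21 c = transpose (Xi c) ** matrix_inv (R1hat c) ** transpose (cD1 c) - transpose (cD2 c)"

definition T12 :: "('n::finite,'m1::finite,'m2::finite) coef \<Rightarrow> real^'m2^'n" where
  "T12 c = transpose (T21 c)"

definition T22 :: "('n::finite,'m1::finite,'m2::finite) coef \<Rightarrow> real^'m2^'m2" where
  "T22 c = transpose (Xi c) ** matrix_inv (R1hat c) ** Xi c - cR2 c
           - transpose (cD2 c) ** cP c ** cD2 c"

definition Ftil :: "('n::finite,'m1::finite,'m2::finite) coef \<Rightarrow> real^'n^'n" where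
  "Ftil c = Chat c - Hhat c ** matrix_inv (T22 c) ** T21 c"

definition S1til :: "('n::finite,'m1::finite,'m2::finite) coef \<Rightarrow> real^'n^'n" where
  "S1til c = Sm1 c - T12 c ** matrix_inv (T22 c) ** Sm2 c"

definition T11til :: "('n::finite,'m1::finite,'m2::finite) coef \<Rightarrow> real^'n^'n" where
  "T11til c = T11 c - T12 c ** matrix_inv (T22 c) ** T21 c"

definition That_op :: "('n::finite,'m1::finite,'m2::finite) coef \<Rightarrow> real^'n^'n \<Rightarrow> real^'n^'n" where
  "That_op c X = mat 1 + X ** T11til c"

definition Fhat_op :: "('n::finite,'m1::finite,'m2::finite) coef \<Rightarrow> real^'n^'n \<Rightarrow> real^'n^'n" where
  "Fhat_op c X = Ftil c + X ** transpose (S1til c)"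

definition Hhat_op :: "('n::finite,'m1::finite,'m2::finite) coef \<Rightarrow> real^'n^'n \<Rightarrow> real^'m2^'n" where
  "Hhat_op c X = Hhat c + X ** transpose (Sm2 c)"

end

theory Submission
  imports Defs
begin

lemma norm_mat_sq: "(norm (A::real^'n^'m))^2 = (\<Sum>i\<in>UNIV. \<Sum>j\<in>UNIV. (A$i$j)^2)"
  unfolding norm_vec_def L2_set_def
  by (simp add: sum_nonneg)

lemma norm_transpose: "norm (transpose (A::real^'n^'m)) = norm A"
proof -
  have "(norm (transpose A))^2 = (norm A)^2"
    unfolding norm_mat_sq transpose_def by (subst sum.swap) simp
  then show ?thesis by (simp add: power2_eq_iff_nonneg)
qed

lemma norm_mv: "norm ((A::real^'n^'m) *v x) \<le> norm A * norm x"
proof -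
  have "norm (A *v x) \<le> norm (\<chi> i. norm (A$i) * norm x)"
    by (rule norm_le_componentwise_cart)
       (simp add: matrix_vector_mul_component Cauchy_Schwarz_ineq2)
  also have "\<dots> = norm (norm x *\<^sub>R (\<chi> i. norm (A$i)))"
    by (rule arg_cong[where f=norm]) (simp add: vec_eq_iff mult.commute)
  also have "\<dots> = norm x * norm (\<chi> i. norm (A$i))" by (simp only: norm_scaleR abs_norm_cancel)
  also have "norm (\<chi> i. norm (A$i)) = norm A"
    unfolding norm_vec_def[of A] norm_vec_def[of "\<chi> i. norm (A$i)"] by simp
  ultimately show ?thesis by (simp add: mult.commute)
qed

lemma norm_mm: "norm ((A::real^'n^'m) ** (B::real^'p^'n)) \<le> norm A * norm B"
proof -
  have "norm (transpose (A ** B)) = norm (transpose B ** transpose A)"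
    by (simp add: matrix_transpose_mul)
  have row: "norm ((A ** B)$i) \<le> norm (A$i) * norm B" for i
  proof -
    have "(A ** B)$i = transpose B *v A$i"
      by (simp add: vec_eq_iff matrix_matrix_mult_def matrix_vector_mult_def transpose_def mult.commute)
    then show ?thesis using norm_mv[of "transpose B" "A$i"] by (simp add: norm_transpose mult.commute)
  qed
  have "norm (A ** B) \<le> norm (\<chi> i. norm (A$i) * norm B)"
    by (rule norm_le_componentwise_cart) (simp add: row)
  also have "\<dots> = norm (norm B *\<^sub>R (\<chi> i. norm (A$i)))"
    by (rule arg_cong[where f=norm]) (simp add: vec_eq_iff mult.commute)
  also have "\<dots> = norm B * norm (\<chi> i. norm (A$i))" by (simp only: norm_scaleR abs_norm_cancel)
  also have "norm (\<chi> i. norm (A$i)) = norm A"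
    unfolding norm_vec_def[of A] norm_vec_def[of "\<chi> i. norm (A$i)"] by simp
  ultimately show ?thesis by (simp add: mult.commute)
qed

lemma bounded_bilinear_mm: "bounded_bilinear (\<lambda>(A::real^'n^'m) (B::real^'p^'n). A ** B)"
proof
  show "(a + a') ** b = a ** b + a' ** b" for a a' :: "real^'n^'m" and b :: "real^'p^'n"
    by (simp add: matrix_matrix_mult_def vec_eq_iff sum.distrib distrib_right)
  show "a ** (b + b') = a ** b + a ** b'" for a :: "real^'n^'m" and b b' :: "real^'p^'n"
    by (simp add: matrix_add_ldistrib)
  show "(r *\<^sub>R a) ** b = r *\<^sub>R (a ** b)" for r and a :: "real^'n^'m" and b :: "real^'p^'n"
    by (rule scalar_matrix_assoc[symmetric])
  show "a ** (r *\<^sub>R b) = r *\<^sub>R (a ** b)" for r and a :: "real^'n^'m" and b :: "real^'p^'n"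
    by (simp only: matrix_scalar_ac scalar_matrix_assoc)
  show "\<exists>K. \<forall>a b. norm (a ** b) \<le> norm (a::real^'n^'m) * norm (b::real^'p^'n) * K"
    by (rule exI[of _ 1]) (simp add: norm_mm)
qed

lemma bounded_linear_transpose: "bounded_linear (transpose :: real^'n^'m \<Rightarrow> real^'m^'n)"
proof (rule bounded_linear_intro[of _ 1])
  show "norm (transpose x) \<le> norm x * 1" for x :: "real^'n^'m" by (simp add: norm_transpose)
qed (auto simp: transpose_def vec_eq_iff)


lemma mm_add_r: "((A::real^'n^'m) + B) ** (C::real^'p^'n) = A ** C + B ** C"
  by (rule bounded_bilinear.add_left[OF bounded_bilinear_mm])
lemma mm_add_l: "(A::real^'n^'m) ** ((B::real^'p^'n) + C) = A ** B + A ** C"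
  by (rule bounded_bilinear.add_right[OF bounded_bilinear_mm])
lemma mm_diff_r: "((A::real^'n^'m) - B) ** (C::real^'p^'n) = A ** C - B ** C"
  by (rule bounded_bilinear.diff_left[OF bounded_bilinear_mm])
lemma mm_diff_l: "(A::real^'n^'m) ** ((B::real^'p^'n) - C) = A ** B - A ** C"
  by (rule bounded_bilinear.diff_right[OF bounded_bilinear_mm])
lemma mm_neg_r: "(- (A::real^'n^'m)) ** (C::real^'p^'n) = - (A ** C)"
  by (rule bounded_bilinear.minus_left[OF bounded_bilinear_mm])
lemma mm_neg_l: "(A::real^'n^'m) ** (- (B::real^'p^'n)) = - (A ** B)"
  by (rule bounded_bilinear.minus_right[OF bounded_bilinear_mm])
lemma mm_scale_r: "(r *\<^sub>R (A::real^'n^'m)) ** (C::real^'p^'n) = r *\<^sub>R (A ** C)"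
  by (rule bounded_bilinear.scaleR_left[OF bounded_bilinear_mm])
lemma mm_scale_l: "(A::real^'n^'m) ** (r *\<^sub>R (B::real^'p^'n)) = r *\<^sub>R (A ** B)"
  by (rule bounded_bilinear.scaleR_right[OF bounded_bilinear_mm])
lemma mm_sum_r: "(\<Sum>k\<in>S. f k :: real^'n^'m) ** (C::real^'p^'n) = (\<Sum>k\<in>S. f k ** C)"
  by (rule bounded_bilinear.sum_left[OF bounded_bilinear_mm])
lemma mm_sum_l: "(A::real^'n^'m) ** (\<Sum>k\<in>S. f k :: real^'p^'n) = (\<Sum>k\<in>S. A ** f k)"
  by (rule bounded_bilinear.sum_right[OF bounded_bilinear_mm])

lemmas mm_distrib = mm_add_r mm_add_l mm_diff_r mm_diff_l mm_neg_r mm_neg_l mm_scale_r mm_scale_l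
  mm_sum_r mm_sum_l

lemma tr_add: "transpose ((A::real^'n^'m) + B) = transpose A + transpose B"
  by (simp add: transpose_def vec_eq_iff)
lemma tr_diff: "transpose ((A::real^'n^'m) - B) = transpose A - transpose B"
  by (simp add: transpose_def vec_eq_iff)
lemma tr_neg: "transpose (- (A::real^'n^'m)) = - transpose A"
  by (simp add: transpose_def vec_eq_iff)
lemma tr_sum: "transpose (\<Sum>k\<in>S. f k :: real^'n^'m) = (\<Sum>k\<in>S. transpose (f k))"
  by (rule linear_sum[OF bounded_linear.linear[OF bounded_linear_transpose]])
lemmas tr_distrib = tr_add tr_diff tr_neg tr_sum transpose_scalar matrix_transpose_mul

section \<open>Inverses\<close>

lemma inv_lr:
  assumes "invertible (A::real^'n^'n)"
  shows "matrix_inv A ** A = mat 1" "A ** matrix_inv A = mat 1"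
proof -
  have "\<exists>A'. A ** A' = mat 1 \<and> A' ** A = mat 1" using assms by (simp add: invertible_def)
  then have "A ** matrix_inv A = mat 1 \<and> matrix_inv A ** A = mat 1"
    unfolding matrix_inv_def by (rule someI_ex)
  then show "matrix_inv A ** A = mat 1" "A ** matrix_inv A = mat 1" by auto
qed

lemma inv_unique:
  assumes "(A::real^'n^'n) ** B = mat 1"
  shows "matrix_inv A = B" "invertible A"
proof -
  show inv: "invertible A" using assms invertible_right_inverse by blast
  have "matrix_inv A = matrix_inv A ** (A ** B)" using assms by simp
  also have "\<dots> = B" by (simp add: matrix_mul_assoc inv_lr[OF inv])
  finally show "matrix_inv A = B" .
qed

lemma inv_unique_l:
  assumes "(B::real^'n^'n) ** A = mat 1"
  shows "matrix_inv A = B" "invertible A"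
proof -
  show inv: "invertible A" using assms invertible_left_inverse by blast
  have "matrix_inv A = (B ** A) ** matrix_inv A" using assms by simp
  also have "\<dots> = B" by (simp flip: matrix_mul_assoc add: inv_lr[OF inv])
  finally show "matrix_inv A = B" .
qed

lemma invertible_inv: "invertible (A::real^'n^'n) \<Longrightarrow> invertible (matrix_inv A)"
  using inv_lr invertible_def by blast

lemma inv_inv: "invertible (A::real^'n^'n) \<Longrightarrow> matrix_inv (matrix_inv A) = A"
  using inv_unique(1) inv_lr(1) by blast

lemma inv_mult:
  assumes "invertible (A::real^'n^'n)" "invertible (B::real^'n^'n)"
  shows "matrix_inv (A ** B) = matrix_inv B ** matrix_inv A"
proof (rule inv_unique(1))
  have "A ** B ** (matrix_inv B ** matrix_inv A) = A ** (B ** matrix_inv B) ** matrix_inv A"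
    by (simp add: matrix_mul_assoc)
  then show "A ** B ** (matrix_inv B ** matrix_inv A) = mat 1"
    by (simp add: inv_lr assms)
qed

lemma inv_transpose:
  assumes "invertible (A::real^'n^'n)"
  shows "matrix_inv (transpose A) = transpose (matrix_inv A)"
  by (rule inv_unique(1)) (simp add: matrix_transpose_mul[symmetric] inv_lr assms)

lemma inv_scale_id:
  assumes "c \<noteq> 0"
  shows "matrix_inv (c *\<^sub>R (mat 1::real^'n^'n)) = (1/c) *\<^sub>R mat 1"
  by (rule inv_unique(1)) (simp add: mm_scale_l mm_scale_r assms)

lemma mat1_neq0: "(mat 1 :: real^'n^'n) \<noteq> 0"
proof
  assume "(mat 1 :: real^'n^'n) = 0"
  then have "(mat 1 :: real^'n^'n) $ undefined $ undefined = 0" by simp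
  then show False by (simp add: mat_def)
qed

lemma inv_noninv:
  assumes "\<not> invertible (A::real^'n^'n)"
  shows "matrix_inv A = matrix_inv (0::real^'n^'n)"
proof -
  have "\<not> invertible (0::real^'n^'n)" using mat1_neq0 by (auto simp: invertible_def)
  then have "(\<lambda>A'. A ** A' = mat 1 \<and> A' ** A = mat 1) = (\<lambda>A'. (0::real^'n^'n) ** A' = mat 1 \<and> A' ** 0 = mat 1)"
    using assms unfolding invertible_def by auto
  then show ?thesis unfolding matrix_inv_def by simp
qed

section \<open>Norm bounds\<close>

lemma transpose_row_axis: "transpose (M::real^'n^'m) $ j = M *v axis j 1"
  by (simp add: vec_eq_iff transpose_def matrix_vector_mul_component inner_axis)

lemma norm_le_sum_rows: "norm (M::real^'n^'m) \<le> (\<Sum>i\<in>UNIV. norm (M $ i))"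
  unfolding norm_vec_def[of M] by (rule L2_set_le_sum) simp

lemma norm_from_mv:
  assumes "\<And>x. norm ((M::real^'n^'m) *v x) \<le> c * norm x"
  shows "norm M \<le> real CARD('n) * c"
proof -
  have "norm M = norm (transpose M)" by (simp add: norm_transpose)
  also have "\<dots> \<le> (\<Sum>j\<in>UNIV. norm (transpose M $ j))" by (rule norm_le_sum_rows)
  also have "\<dots> \<le> (\<Sum>j\<in>(UNIV::'n set). c)"
    by (rule sum_mono) (use assms[of "axis _ 1"] in \<open>simp add: transpose_row_axis\<close>)
  finally show ?thesis by simp
qed

lemma lower_bound_inv:
  assumes c: "c > 0" and lb: "\<And>x. c * norm x \<le> norm ((M::real^'n^'n) *v x)"
  shows "invertible M" "\<And>y. norm (matrix_inv M *v y) \<le> norm y / c"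
    "norm (matrix_inv M) \<le> real CARD('n) / c"
proof -
  have "inj ((*v) M)"
  proof (rule injI)
    fix x y assume "M *v x = M *v y"
    then have "M *v (x - y) = 0" by (simp add: matrix_vector_mult_diff_distrib)
    then have "c * norm (x - y) \<le> 0" using lb[of "x - y"] by simp
    then show "x = y" using c by (simp add: mult_le_0_iff)
  qed
  then show inv: "invertible M"
    using matrix_left_invertible_injective invertible_left_inverse by blast
  show y: "norm (matrix_inv M *v y) \<le> norm y / c" for y
  proof -
    have "c * norm (matrix_inv M *v y) \<le> norm (M *v (matrix_inv M *v y))" by (rule lb)
    also have "M *v (matrix_inv M *v y) = y" by (simp add: matrix_vector_mul_assoc inv_lr[OF inv])
    finally show ?thesis using c by (simp add: field_simps)
  qed
  have "norm (matrix_inv M) \<le> real CARD('n) * (1/c)"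
    by (rule norm_from_mv) (use y in \<open>simp add: divide_inverse mult.commute\<close>)
  then show "norm (matrix_inv M) \<le> real CARD('n) / c" by simp
qed

lemma invertible_lower_bound:
  assumes "invertible (M::real^'n^'n)"
  shows "\<exists>c>0. \<forall>x. c * norm x \<le> norm (M *v x)"
proof (intro exI[of _ "1 / (norm (matrix_inv M) + 1)"] conjI allI)
  fix x
  have "norm x = norm (matrix_inv M *v (M *v x))"
    by (simp add: matrix_vector_mul_assoc inv_lr[OF assms])
  also have "\<dots> \<le> norm (matrix_inv M) * norm (M *v x)" by (rule norm_mv)
  also have "\<dots> \<le> (norm (matrix_inv M) + 1) * norm (M *v x)"
    by (simp add: mult_right_mono)
  finally show "1 / (norm (matrix_inv M) + 1) * norm x \<le> norm (M *v x)"
    by (simp add: field_simps add_pos_nonneg)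
qed (smt (verit) norm_ge_zero divide_pos_pos)

lemma inv_local:
  assumes "invertible (A::real^'n^'n)"
  shows "\<exists>d>0. \<exists>K\<ge>0. \<forall>B. norm (B - A) < d \<longrightarrow> invertible B \<and>
            norm (matrix_inv B - matrix_inv A) \<le> K * norm (B - A)"
proof -
  obtain c where c: "c > 0" "\<And>x. c * norm x \<le> norm (A *v x)"
    using invertible_lower_bound[OF assms] by blast
  show ?thesis
  proof (rule exI[of _ "c/2"], intro conjI exI[of _ "real CARD('n) / (c/2) * norm (matrix_inv A)"] allI impI)
    show "c/2 > 0" using c by simp
    show "real CARD('n) / (c/2) * norm (matrix_inv A) \<ge> 0" using c by simp
    fix B :: "real^'n^'n" assume B: "norm (B - A) < c/2"
    have lbB: "c/2 * norm x \<le> norm (B *v x)" for x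
    proof -
      have "norm ((B - A) *v x) \<le> norm (B - A) * norm x" by (rule norm_mv)
      also have "\<dots> \<le> c/2 * norm x" using B by (intro mult_right_mono) auto
      finally have "norm ((B - A) *v x) \<le> c/2 * norm x" .
      moreover have "B *v x = A *v x + (B - A) *v x" by (simp add: matrix_vector_mult_diff_rdistrib)
      moreover have "norm (A *v x) \<le> norm (A *v x + (B - A) *v x) + norm ((B - A) *v x)"
        by (metis add_diff_cancel_right' norm_triangle_ineq4)
      ultimately show ?thesis using c(2)[of x] by simp
    qed
    have cp: "c/2 > 0" using c by simp
    note LB = lower_bound_inv[OF cp lbB]
    show "invertible B" by (rule LB(1))
    have "matrix_inv B - matrix_inv A = matrix_inv B ** (A - B) ** matrix_inv A"
      by (simp add: mm_distrib inv_lr assms LB(1) flip: matrix_mul_assoc)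
    also have "norm \<dots> \<le> norm (matrix_inv B) * norm (A - B) * norm (matrix_inv A)"
      by (meson norm_mm order_trans mult_right_mono norm_ge_zero)
    also have "\<dots> \<le> real CARD('n) / (c/2) * norm (A - B) * norm (matrix_inv A)"
      by (intro mult_right_mono LB(3)) auto
    also have "norm (A - B) = norm (B - A)" by (rule norm_minus_commute)
    finally show "norm (matrix_inv B - matrix_inv A) \<le> real CARD('n) / (c/2) * norm (matrix_inv A) * norm (B - A)"
      by (simp add: mult_ac)
  qed
qed

lemma inv_isCont:
  assumes "invertible (A::real^'n^'n)"
  shows "isCont matrix_inv A"
proof -
  obtain d K where d: "d > 0" and K: "K \<ge> 0" and DK: "\<And>B. norm (B - A) < d \<Longrightarrow> invertible B \<and>
            norm (matrix_inv B - matrix_inv A) \<le> K * norm (B - A)"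
    using inv_local[OF assms] by blast
  show ?thesis
  proof (rule continuous_at_eps_delta[THEN iffD2], intro allI impI)
    fix e :: real assume e: "e > 0"
    show "\<exists>d'>0. \<forall>x'. dist x' A < d' \<longrightarrow> dist (matrix_inv x') (matrix_inv A) < e"
    proof (intro exI[of _ "min d (e / (K + 1))"] conjI allI impI)
      show "0 < min d (e / (K + 1))" using d e K by simp
      fix B assume "dist B A < min d (e / (K + 1))"
      then have B1: "norm (B - A) < d" and B2: "norm (B - A) < e / (K+1)" by (auto simp: dist_norm)
      have "norm (matrix_inv B - matrix_inv A) \<le> K * norm (B - A)" using DK[OF B1] by simp
      also have "\<dots> \<le> (K + 1) * norm (B - A)" by (simp add: mult_right_mono)
      also have "\<dots> < e" using B2 K by (simp add: field_simps add_pos_nonneg)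
      finally show "dist (matrix_inv B) (matrix_inv A) < e" by (simp add: dist_norm)
    qed
  qed
qed

lemma open_invertible: "open {A::real^'n^'n. invertible A}"
proof (rule openI)
  fix A :: "real^'n^'n" assume "A \<in> {A. invertible A}"
  then obtain d K where d: "d > 0" and DK: "\<And>B. norm (B - A) < d \<Longrightarrow> invertible B"
    using inv_local by blast
  show "\<exists>e>0. ball A e \<subseteq> {A. invertible A}"
    using d DK by (intro exI[of _ d]) (auto simp: dist_norm norm_minus_commute)
qed

lemma inv_continuous_on: "continuous_on {A::real^'n^'n. invertible A} matrix_inv"
  by (rule continuous_at_imp_continuous_on) (auto intro: inv_isCont)

lemma inv_borel: "(matrix_inv :: real^'n^'n \<Rightarrow> _) \<in> borel_measurable borel"
proof -
  have eq: "(matrix_inv :: real^'n^'n \<Rightarrow> _) =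
     (\<lambda>A. if A \<in> {A. invertible A} then matrix_inv A else matrix_inv (0::real^'n^'n))"
    by (rule ext) (simp add: inv_noninv)
  show ?thesis
    by (subst eq, rule borel_measurable_continuous_on_if)
       (auto intro: borel_open open_invertible inv_continuous_on continuous_on_const)
qed

lemma inner_symm: "symm M \<Longrightarrow> x \<bullet> ((M::real^'n^'n) *v y) = (M *v x) \<bullet> y"
proof -
  assume "symm M"
  then have t: "transpose M = M" by (simp add: symm_def)
  have "x \<bullet> (M *v y) = (x v* M) \<bullet> y" by (simp add: dot_lmul_matrix)
  also have "x v* M = M *v x" using transpose_matrix_vector[of M x] t by simp
  finally show ?thesis .
qed

lemma posdef_invertible: "posdef (P::real^'n^'n) \<Longrightarrow> invertible P"
proof -
  assume P: "posdef P"
  have "inj ((*v) P)"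
  proof (rule injI)
    fix x y assume "P *v x = P *v y"
    then have "P *v (x - y) = 0" by (simp add: matrix_vector_mult_diff_distrib)
    show "x = y"
    proof (rule ccontr)
      assume "x \<noteq> y"
      then have "0 < (x - y) \<bullet> (P *v (x - y))" using P unfolding posdef_def by simp
      then show False using \<open>P *v (x - y) = 0\<close> by simp
    qed
  qed
  then show ?thesis using matrix_left_invertible_injective invertible_left_inverse by blast
qed

lemma symm_inv: "symm (P::real^'n^'n) \<Longrightarrow> invertible P \<Longrightarrow> symm (matrix_inv P)"
  by (simp add: symm_def inv_transpose[symmetric])

lemma posdef_psd: "posdef P \<Longrightarrow> psd P"
  unfolding posdef_def psd_def
proof (intro conjI allI; (elim conjE)?)
  fix x :: "real^'a" assume "symm P" "\<forall>x. x \<noteq> 0 \<longrightarrow> 0 < x \<bullet> (P *v x)"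
  then show "0 \<le> x \<bullet> (P *v x)" by (cases "x = 0") (auto intro: less_imp_le)
qed auto

lemma psd_inv: assumes "posdef (P::real^'n^'n)" shows "psd (matrix_inv P)" "symm (matrix_inv P)"
proof -
  have inv: "invertible P" by (rule posdef_invertible[OF assms])
  show sy: "symm (matrix_inv P)" using assms inv symm_inv posdef_def by blast
  show "psd (matrix_inv P)" unfolding psd_def
  proof (intro conjI allI sy)
    fix x
    let ?u = "matrix_inv P *v x"
    have "x = P *v ?u" by (simp add: matrix_vector_mul_assoc inv_lr[OF inv])
    then have "x \<bullet> ?u = (P *v ?u) \<bullet> ?u" by simp
    also have "\<dots> = ?u \<bullet> (P *v ?u)" by (simp add: inner_commute)
    also have "\<dots> \<ge> 0" using posdef_psd[OF assms] by (simp add: psd_def)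
    finally show "0 \<le> x \<bullet> (matrix_inv P *v x)" .
  qed
qed

lemma symm_diff: "symm A \<Longrightarrow> symm B \<Longrightarrow> symm ((A::real^'n^'n) - B)"
  by (simp add: symm_def tr_diff)

lemma symm_add: "symm A \<Longrightarrow> symm B \<Longrightarrow> symm ((A::real^'n^'n) + B)"
  by (simp add: symm_def tr_add)

lemma psd_inv_antimono:
  assumes P1: "posdef (P1::real^'n^'n)" and P2: "posdef P2" and D: "psd (P2 - P1)"
  shows "psd (matrix_inv P1 - matrix_inv P2)"
  unfolding psd_def
proof (intro conjI allI)
  show "symm (matrix_inv P1 - matrix_inv P2)" using psd_inv P1 P2 symm_diff by blast
  fix x
  have i1: "invertible P1" and i2: "invertible P2" using P1 P2 posdef_invertible by auto
  have s1: "symm P1" using P1 posdef_def by blast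
  define u where "u = matrix_inv P1 *v x"
  define v where "v = matrix_inv P2 *v x"
  have Pu: "P1 *v u = x" by (simp add: u_def matrix_vector_mul_assoc inv_lr[OF i1])
  have Pv: "P2 *v v = x" by (simp add: v_def matrix_vector_mul_assoc inv_lr[OF i2])
  have "0 \<le> (u - v) \<bullet> (P1 *v (u - v))" using posdef_psd[OF P1] by (simp add: psd_def)
  also have "\<dots> = u \<bullet> x - v \<bullet> x - u \<bullet> (P1 *v v) + v \<bullet> (P1 *v v)"
    by (simp add: matrix_vector_mult_diff_distrib inner_diff Pu)
  also have "u \<bullet> (P1 *v v) = x \<bullet> v" by (simp add: inner_symm[OF s1] Pu)
  also have "v \<bullet> (P1 *v v) \<le> v \<bullet> x"
  proof -
    have "0 \<le> v \<bullet> ((P2 - P1) *v v)" using D by (simp add: psd_def)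
    then show ?thesis by (simp add: matrix_vector_mult_diff_rdistrib inner_diff Pv)
  qed
  finally have "0 \<le> u \<bullet> x - x \<bullet> v" by (simp add: inner_commute)
  then show "0 \<le> x \<bullet> ((matrix_inv P1 - matrix_inv P2) *v x)"
    by (simp add: matrix_vector_mult_diff_rdistrib inner_diff u_def[symmetric] v_def[symmetric] inner_commute)
qed

lemma quad_axis: "axis i 1 \<bullet> ((A::real^'n^'m) *v axis j 1) = A$i$j"
  by (simp add: inner_axis' matrix_vector_mul_component inner_axis)

lemma quad_pm:
  assumes "symm (A::real^'n^'n)"
  shows "(axis i 1 + axis j 1) \<bullet> (A *v (axis i 1 + axis j 1)) = A$i$i + A$j$j + 2 * A$i$j"
        "(axis i 1 - axis j 1) \<bullet> (A *v (axis i 1 - axis j 1)) = A$i$i + A$j$j - 2 * A$i$j"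
proof -
  have "A$j$i = A$i$j" using assms unfolding symm_def by (metis transpose_def vec_lambda_beta)
  then show "(axis i 1 + axis j 1) \<bullet> (A *v (axis i 1 + axis j 1)) = A$i$i + A$j$j + 2 * A$i$j"
        "(axis i 1 - axis j 1) \<bullet> (A *v (axis i 1 - axis j 1)) = A$i$i + A$j$j - 2 * A$i$j"
    by (simp_all add: matrix_vector_right_distrib matrix_vector_mult_diff_distrib inner_add inner_diff quad_axis)
qed

lemma polar:
  assumes "symm (A::real^'n^'n)"
  shows "A$i$j = ((axis i 1 + axis j 1) \<bullet> (A *v (axis i 1 + axis j 1)) -
                  (axis i 1 - axis j 1) \<bullet> (A *v (axis i 1 - axis j 1))) / 4"
  using quad_pm[OF assms] by simp

lemma psd_diag: "psd (A::real^'n^'n) \<Longrightarrow> 0 \<le> A$i$i"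
proof -
  assume "psd A"
  then have "0 \<le> axis i 1 \<bullet> (A *v axis i 1)" unfolding psd_def by blast
  then show ?thesis by (simp add: quad_axis)
qed

lemma psd_entry: "psd (A::real^'n^'n) \<Longrightarrow> \<bar>A$i$j\<bar> \<le> (A$i$i + A$j$j) / 2"
proof -
  assume a: "psd A"
  have s: "symm A" and q: "\<forall>x. 0 \<le> x \<bullet> (A *v x)" using a psd_def by auto
  have "0 \<le> A$i$i + A$j$j + 2 * A$i$j"
    using q[rule_format, of "axis i 1 + axis j 1"] quad_pm(1)[OF s, of i j] by simp
  moreover have "0 \<le> A$i$i + A$j$j - 2 * A$i$j"
    using q[rule_format, of "axis i 1 - axis j 1"] quad_pm(2)[OF s, of i j] by simp
  ultimately show ?thesis by (simp add: abs_le_iff)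
qed

lemma entries_norm:
  assumes "\<And>i j. \<bar>(A::real^'n^'m)$i$j\<bar> \<le> c"
  shows "norm A \<le> real CARD('m) * real CARD('n) * c"
proof -
  have "norm A \<le> (\<Sum>i\<in>UNIV. norm (A $ i))" by (rule norm_le_sum_rows)
  also have "\<dots> \<le> (\<Sum>i\<in>(UNIV::'m set). \<Sum>j\<in>(UNIV::'n set). c)"
  proof (rule sum_mono)
    fix i
    have "norm (A $ i) \<le> (\<Sum>j\<in>UNIV. \<bar>A$i$j\<bar>)" by (rule norm_le_l1_cart)
    also have "\<dots> \<le> (\<Sum>j\<in>(UNIV::'n set). c)" by (rule sum_mono) (rule assms)
    finally show "norm (A $ i) \<le> (\<Sum>j\<in>(UNIV::'n set). c)" .
  qed
  finally show ?thesis by simp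
qed

lemma psd_le_norm:
  assumes "psd (A::real^'n^'n)" "psd (B - A)"
  shows "norm A \<le> real CARD('n) * real CARD('n) * norm B"
proof (rule entries_norm)
  fix i j
  have d: "A$k$k \<le> norm B" for k
  proof -
    have "(B - A)$k$k \<ge> 0" by (rule psd_diag[OF assms(2)])
    moreover have "B$k$k \<le> norm B"
    proof -
      have "B$k$k \<le> norm (B$k)" using component_le_norm_cart[where x="B$k" and i=k] by simp
      also have "\<dots> \<le> norm B" unfolding norm_vec_def[of B] by (rule member_le_L2_set) simp_all
      finally show ?thesis .
    qed
    ultimately show ?thesis by simp
  qed
  show "\<bar>A$i$j\<bar> \<le> norm B" using psd_entry[OF assms(1), of i j] d[of i] d[of j] by simp
qed

lemma psd_decseq_conv:
  assumes ps: "\<And>k. psd (A k :: real^'n^'n)" and dec: "\<And>k. psd (A k - A (Suc k))"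
  shows "\<exists>L. A \<longlonglongrightarrow> L"
proof -
  have q: "convergent (\<lambda>k. x \<bullet> (A k *v x))" for x
  proof -
    have "decseq (\<lambda>k. x \<bullet> (A k *v x))"
    proof (rule decseq_SucI)
      fix k
      have "0 \<le> x \<bullet> ((A k - A (Suc k)) *v x)" using dec[of k] by (simp add: psd_def)
      then show "x \<bullet> (A (Suc k) *v x) \<le> x \<bullet> (A k *v x)"
        by (simp add: matrix_vector_mult_diff_rdistrib inner_diff)
    qed
    moreover have "\<forall>k. 0 \<le> x \<bullet> (A k *v x)" using ps by (simp add: psd_def)
    ultimately obtain L where "(\<lambda>k. x \<bullet> (A k *v x)) \<longlonglongrightarrow> L" by (rule decseq_convergent)
    then show ?thesis by (auto simp: convergent_def)
  qed
  have e: "convergent (\<lambda>k. A k $ i $ j)" for i j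
  proof -
    have eq: "(\<lambda>k. A k $ i $ j) = (\<lambda>k. ((axis i 1 + axis j 1) \<bullet> (A k *v (axis i 1 + axis j 1)) -
                  (axis i 1 - axis j 1) \<bullet> (A k *v (axis i 1 - axis j 1))) / 4)"
      by (rule ext) (rule polar, use ps in \<open>simp add: psd_def\<close>)
    have "convergent (\<lambda>k. ((axis i 1 + axis j 1) \<bullet> (A k *v (axis i 1 + axis j 1)) -
                  (axis i 1 - axis j 1) \<bullet> (A k *v (axis i 1 - axis j 1))) / 4)"
    proof -
      obtain L1 L2 where "(\<lambda>k. (axis i 1 + axis j 1) \<bullet> (A k *v (axis i 1 + axis j 1))) \<longlonglongrightarrow> L1"
        "(\<lambda>k. (axis i 1 - axis j 1) \<bullet> (A k *v (axis i 1 - axis j 1))) \<longlonglongrightarrow> L2"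
        using q[of "axis i 1 + axis j 1"] q[of "axis i 1 - axis j 1"] by (auto simp: convergent_def)
      then have "(\<lambda>k. ((axis i 1 + axis j 1) \<bullet> (A k *v (axis i 1 + axis j 1)) -
                  (axis i 1 - axis j 1) \<bullet> (A k *v (axis i 1 - axis j 1))) / 4) \<longlonglongrightarrow> (L1 - L2) / 4"
        by (auto intro!: tendsto_intros)
      then show ?thesis by (auto simp: convergent_def)
    qed
    then show ?thesis unfolding eq .
  qed
  have "A \<longlonglongrightarrow> (\<chi> i j. lim (\<lambda>k. A k $ i $ j))"
    by (intro vec_tendstoI) (simp add: e convergent_LIMSEQ_iff[symmetric])
  then show ?thesis by blast
qed

lemmas mm_tendsto = bounded_bilinear.tendsto[OF bounded_bilinear_mm]
lemmas mm_continuous_on = bounded_bilinear.continuous_on[OF bounded_bilinear_mm]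
lemmas tr_tendsto = bounded_linear.tendsto[OF bounded_linear_transpose]

section \<open>Essential boundedness\<close>

definition ebdd :: "real \<Rightarrow> (real \<Rightarrow> 'a::real_normed_vector) \<Rightarrow> bool" where
  "ebdd T f \<longleftrightarrow> (\<exists>B. AE s in lborel. s \<in> {0..T} \<longrightarrow> norm (f s) \<le> B)"

lemma ebddI: "AE s in lborel. s \<in> {0..T} \<longrightarrow> norm (f s) \<le> B \<Longrightarrow> ebdd T f"
  unfolding ebdd_def by blast

lemma ebddE:
  assumes "ebdd T f"
  obtains B where "B \<ge> 0" "AE s in lborel. s \<in> {0..T} \<longrightarrow> norm (f s) \<le> B"
proof -
  obtain B where "AE s in lborel. s \<in> {0..T} \<longrightarrow> norm (f s) \<le> B" using assms ebdd_def by blast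
  then have "AE s in lborel. s \<in> {0..T} \<longrightarrow> norm (f s) \<le> max B 0"
    by eventually_elim auto
  then show ?thesis using that[of "max B 0"] by auto
qed

lemma ebdd_add: "ebdd T f \<Longrightarrow> ebdd T g \<Longrightarrow> ebdd T (\<lambda>s. f s + g s)"
proof -
  assume f: "ebdd T f" and g: "ebdd T g"
  obtain B1 where B1: "B1 \<ge> 0" "AE s in lborel. s \<in> {0..T} \<longrightarrow> norm (f s) \<le> B1"
    using f by (rule ebddE)
  obtain B2 where B2: "B2 \<ge> 0" "AE s in lborel. s \<in> {0..T} \<longrightarrow> norm (g s) \<le> B2"
    using g by (rule ebddE)
  from B1(2) B2(2) have "AE s in lborel. s \<in> {0..T} \<longrightarrow> norm (f s + g s) \<le> B1 + B2"
    by eventually_elim (auto intro: norm_triangle_le add_mono)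
  then show ?thesis by (rule ebddI)
qed

lemma ebdd_diff: "ebdd T f \<Longrightarrow> ebdd T g \<Longrightarrow> ebdd T (\<lambda>s. f s - g s)"
proof -
  assume f: "ebdd T f" and g: "ebdd T g"
  obtain B1 where B1: "B1 \<ge> 0" "AE s in lborel. s \<in> {0..T} \<longrightarrow> norm (f s) \<le> B1"
    using f by (rule ebddE)
  obtain B2 where B2: "B2 \<ge> 0" "AE s in lborel. s \<in> {0..T} \<longrightarrow> norm (g s) \<le> B2"
    using g by (rule ebddE)
  from B1(2) B2(2) have "AE s in lborel. s \<in> {0..T} \<longrightarrow> norm (f s - g s) \<le> B1 + B2"
    by eventually_elim (auto intro: norm_triangle_le_diff add_mono)
  then show ?thesis by (rule ebddI)
qed

lemma ebdd_minus: "ebdd T f \<Longrightarrow> ebdd T (\<lambda>s. - f s)"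
  unfolding ebdd_def by simp

lemma ebdd_mm: "ebdd T f \<Longrightarrow> ebdd T g \<Longrightarrow> ebdd T (\<lambda>s. (f s :: real^'n^'m) ** (g s :: real^'p^'n))"
proof -
  assume f: "ebdd T f" and g: "ebdd T g"
  obtain B1 where B1: "B1 \<ge> 0" "AE s in lborel. s \<in> {0..T} \<longrightarrow> norm (f s) \<le> B1"
    using f by (rule ebddE)
  obtain B2 where B2: "B2 \<ge> 0" "AE s in lborel. s \<in> {0..T} \<longrightarrow> norm (g s) \<le> B2"
    using g by (rule ebddE)
  from B1(2) B2(2) have "AE s in lborel. s \<in> {0..T} \<longrightarrow> norm (f s ** g s) \<le> B1 * B2"
  proof eventually_elim
    case (elim s)
    show ?case
    proof
      assume "s \<in> {0..T}"
      then have "norm (f s) \<le> B1" "norm (g s) \<le> B2" using elim by auto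
      then have "norm (f s) * norm (g s) \<le> B1 * B2" using B1(1) B2(1) by (intro mult_mono) auto
      then show "norm (f s ** g s) \<le> B1 * B2" using norm_mm order_trans by blast
    qed
  qed
  then show ?thesis by (rule ebddI)
qed

lemma ebdd_tr: "ebdd T f \<Longrightarrow> ebdd T (\<lambda>s. transpose (f s :: real^'n^'m))"
  unfolding ebdd_def by (simp add: norm_transpose)

lemma ebdd_scaleR: "ebdd T (f :: real \<Rightarrow> real) \<Longrightarrow> ebdd T g \<Longrightarrow> ebdd T (\<lambda>s. f s *\<^sub>R g s)"
proof -
  assume f: "ebdd T f" and g: "ebdd T g"
  obtain B1 where B1: "B1 \<ge> 0" "AE s in lborel. s \<in> {0..T} \<longrightarrow> norm (f s) \<le> B1"
    using f by (rule ebddE)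
  obtain B2 where B2: "B2 \<ge> 0" "AE s in lborel. s \<in> {0..T} \<longrightarrow> norm (g s) \<le> B2"
    using g by (rule ebddE)
  from B1(2) B2(2) have "AE s in lborel. s \<in> {0..T} \<longrightarrow> norm (f s *\<^sub>R g s) \<le> B1 * B2"
    by eventually_elim (use B1(1) B2(1) in \<open>auto intro: mult_mono\<close>)
  then show ?thesis by (rule ebddI)
qed

lemma ebdd_const: "ebdd T (\<lambda>s. c)"
  by (rule ebddI[of _ _ "norm c"]) simp

lemma ebdd_sum: "finite S \<Longrightarrow> (\<And>k. k \<in> S \<Longrightarrow> ebdd T (f k)) \<Longrightarrow> ebdd T (\<lambda>s. \<Sum>k\<in>S. f k s)"
proof (induction S rule: finite_induct)
  case empty
  then show ?case by (simp add: ebdd_const)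
next
  case (insert x F)
  then show ?case by (simp add: ebdd_add)
qed

lemma ebdd_cont: "continuous_on {0..T} f \<Longrightarrow> ebdd T f"
proof -
  assume "continuous_on {0..T} f"
  then have "compact (f ` {0..T})" by (rule compact_continuous_image) simp
  then obtain B where "\<forall>x\<in>f ` {0..T}. norm x \<le> B"
    using compact_imp_bounded bounded_iff by metis
  then show ?thesis by (intro ebddI[of _ _ B]) auto
qed

lemma Linf_ebdd: "Linf T f \<Longrightarrow> ebdd T f"
  unfolding Linf_def ebdd_def by blast

lemma pos_lower:
  assumes d: "\<delta> > 0" and q: "\<And>x. \<delta> * (x \<bullet> x) \<le> x \<bullet> ((M::real^'n^'n) *v x)"
  shows "\<delta> * norm x \<le> norm (M *v x)"
proof (cases "x = 0")
  case True then show ?thesis by simp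
next
  case False
  have "\<delta> * (norm x * norm x) \<le> norm x * norm (M *v x)"
    using q[of x] Cauchy_Schwarz_ineq2[of x "M *v x"]
    by (simp add: power2_norm_eq_inner[symmetric] power2_eq_square)
  then show ?thesis using False by (simp add: mult.assoc[symmetric] mult.commute[of \<delta>])
qed

lemma unif_pos_inv:
  assumes "unif_pos T (F :: real \<Rightarrow> real^'n^'n)"
  shows "ebdd T (\<lambda>s. matrix_inv (F s))" "AE s in lborel. s \<in> {0..T} \<longrightarrow> invertible (F s)"
proof -
  obtain \<delta> where d: "\<delta> > 0" and ae: "AE s in lborel. s \<in> {0..T} \<longrightarrow> (\<forall>x. \<delta> * (x \<bullet> x) \<le> x \<bullet> (F s *v x))"
    using assms unfolding unif_pos_def by blast
  from ae have a: "AE s in lborel. s \<in> {0..T} \<longrightarrow> invertible (F s) \<and> norm (matrix_inv (F s)) \<le> real CARD('n) / \<delta>"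
  proof eventually_elim
    case (elim s)
    show ?case
    proof
      assume "s \<in> {0..T}"
      then have "\<And>x. \<delta> * norm x \<le> norm (F s *v x)" using elim pos_lower[OF d] by blast
      from lower_bound_inv[OF d this] show "invertible (F s) \<and> norm (matrix_inv (F s)) \<le> real CARD('n) / \<delta>"
        by blast
    qed
  qed
  have "AE s in lborel. s \<in> {0..T} \<longrightarrow> norm (matrix_inv (F s)) \<le> real CARD('n) / \<delta>"
    using a by eventually_elim auto
  then show "ebdd T (\<lambda>s. matrix_inv (F s))" by (rule ebddI)
  show "AE s in lborel. s \<in> {0..T} \<longrightarrow> invertible (F s)"
    using a by eventually_elim auto
qed

section \<open>Measurability up to [0,T]\<close>

definition mver :: "real \<Rightarrow> (real \<Rightarrow> 'a::topological_space) \<Rightarrow> bool" where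
  "mver T f \<longleftrightarrow> (\<exists>g \<in> borel_measurable lborel. \<forall>s\<in>{0..T}. f s = g s)"

lemma mver_set: "set_borel_measurable lborel {0..T} (f :: real \<Rightarrow> 'a::real_normed_vector) \<Longrightarrow> mver T f"
  unfolding mver_def set_borel_measurable_def by (intro bexI[of _ "\<lambda>s. indicator {0..T} s *\<^sub>R f s"]) auto

lemma mver_set_sub:
  fixes f :: "real \<Rightarrow> 'a::{real_normed_vector,second_countable_topology}"
  assumes "mver T f" "S \<subseteq> {0..T}" "S \<in> sets borel"
  shows "set_borel_measurable lborel S f"
proof -
  obtain g where g: "g \<in> borel_measurable lborel" "\<forall>s\<in>{0..T}. f s = g s" using assms mver_def by blast
  have "(\<lambda>s. indicator S s *\<^sub>R f s) = (\<lambda>s. indicator S s *\<^sub>R g s)"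
    using g(2) assms(2) by (auto simp: fun_eq_iff indicator_def)
  moreover have "(\<lambda>s. indicator S s *\<^sub>R g s) \<in> borel_measurable lborel"
  proof -
    have "(indicator S :: real \<Rightarrow> real) \<in> borel_measurable lborel"
      using assms(3) by (intro borel_measurable_indicator) simp
    then show ?thesis using g(1) by (rule borel_measurable_scaleR)
  qed
  ultimately show ?thesis unfolding set_borel_measurable_def by simp
qed

lemma mver_comp: "mver T f \<Longrightarrow> h \<in> borel_measurable borel \<Longrightarrow> mver T (\<lambda>s. h (f s))"
  unfolding mver_def
proof (elim bexE)
  fix g assume g: "g \<in> borel_measurable lborel" "\<forall>s\<in>{0..T}. f s = g s" and h: "h \<in> borel_measurable borel"
  show "\<exists>g\<in>borel_measurable lborel. \<forall>s\<in>{0..T}. h (f s) = g s"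
  proof (rule bexI[of _ "\<lambda>s. h (g s)"])
    show "(\<lambda>s. h (g s)) \<in> borel_measurable lborel" using measurable_compose[OF g(1) h] .
    show "\<forall>s\<in>{0..T}. h (f s) = h (g s)" using g(2) by simp
  qed
qed

lemma mver_comp2:
  fixes f :: "real \<Rightarrow> 'a::second_countable_topology" and g :: "real \<Rightarrow> 'b::second_countable_topology"
  assumes "mver T f" "mver T g" "continuous_on UNIV (\<lambda>x. H (fst x) (snd x))"
  shows "mver T (\<lambda>s. H (f s) (g s))"
proof -
  obtain f' where f': "f' \<in> borel_measurable lborel" "\<forall>s\<in>{0..T}. f s = f' s"
    using assms(1) unfolding mver_def by blast
  obtain g' where g': "g' \<in> borel_measurable lborel" "\<forall>s\<in>{0..T}. g s = g' s"
    using assms(2) unfolding mver_def by blast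
  have "(\<lambda>s. H (f' s) (g' s)) \<in> borel_measurable lborel"
    by (rule borel_measurable_continuous_Pair[OF f'(1) g'(1) assms(3)])
  then show ?thesis unfolding mver_def using f' g' by (intro bexI[of _ "\<lambda>s. H (f' s) (g' s)"]) auto
qed

lemma mver_mm: "mver T f \<Longrightarrow> mver T g \<Longrightarrow> mver T (\<lambda>s. (f s :: real^'n^'m) ** (g s :: real^'p^'n))"
  by (rule mver_comp2[where H="(**)"]) (auto intro!: mm_continuous_on continuous_intros)

lemma mver_add: "mver T f \<Longrightarrow> mver T g \<Longrightarrow> mver T (\<lambda>s. (f s :: 'a::{real_normed_vector,second_countable_topology}) + g s)"
  by (rule mver_comp2[where H="(+)"]) (auto intro!: continuous_intros)

lemma mver_diff: "mver T f \<Longrightarrow> mver T g \<Longrightarrow> mver T (\<lambda>s. (f s :: 'a::{real_normed_vector,second_countable_topology}) - g s)"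
  by (rule mver_comp2[where H="(-)"]) (auto intro!: continuous_intros)

lemma mver_scaleR: "mver T f \<Longrightarrow> mver T g \<Longrightarrow> mver T (\<lambda>s. (f s :: real) *\<^sub>R (g s :: 'a::{real_normed_vector,second_countable_topology}))"
  by (rule mver_comp2[where H="(*\<^sub>R)"]) (auto intro!: continuous_intros)

lemma mver_minus: "mver T f \<Longrightarrow> mver T (\<lambda>s. - (f s :: 'a::{real_normed_vector,second_countable_topology}))"
  using mver_comp[of T f uminus] by simp

lemma mver_tr: "mver T f \<Longrightarrow> mver T (\<lambda>s. transpose (f s :: real^'n^'m))"
proof -
  assume "mver T f"
  moreover have "(transpose :: real^'n^'m \<Rightarrow> _) \<in> borel_measurable borel"
    by (intro borel_measurable_continuous_onI linear_continuous_on bounded_linear_transpose)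
  ultimately show ?thesis using mver_comp[of T f transpose] by simp
qed

lemma mver_inv: "mver T f \<Longrightarrow> mver T (\<lambda>s. matrix_inv (f s :: real^'n^'n))"
  using mver_comp[of T f matrix_inv] inv_borel by blast

lemma mver_const: "mver T (\<lambda>s. c)"
  unfolding mver_def by (intro bexI[of _ "\<lambda>s. c"]) auto

lemma mver_sum: "finite S \<Longrightarrow> (\<And>k. k \<in> S \<Longrightarrow> mver T (f k)) \<Longrightarrow>
   mver T (\<lambda>s. \<Sum>k\<in>S. f k s :: 'a::{real_normed_vector,second_countable_topology})"
proof (induction S rule: finite_induct)
  case empty
  then show ?case by (simp add: mver_const)
next
  case (insert x F)
  then show ?case by (simp add: mver_add)
qed

lemma mver_cont: "continuous_on {0..T} f \<Longrightarrow> mver T (f :: real \<Rightarrow> 'a::real_normed_vector)"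
  unfolding mver_def
  by (intro bexI[of _ "\<lambda>s. indicator {0..T} s *\<^sub>R f s"])
     (auto intro: borel_measurable_continuous_on_indicator)

lemma Linf_mver: "Linf T f \<Longrightarrow> mver T f"
  unfolding Linf_def by (auto intro: mver_set)

lemma mver_ebdd_integrable:
  fixes f :: "real \<Rightarrow> 'a::{banach,second_countable_topology}"
  assumes "mver T f" "ebdd T f"
  shows "set_integrable lborel {0..T} f"
proof -
  obtain B where B: "B \<ge> 0" "AE s in lborel. s \<in> {0..T} \<longrightarrow> norm (f s) \<le> B" using assms(2) ebddE by blast
  have "integrable lborel (\<lambda>s. indicator {0..T} s * B :: real)"
    by (intro integrable_mult_left integrable_real_indicator) (auto simp: emeasure_lborel_Icc_eq)
  moreover have "(\<lambda>s. indicator {0..T} s *\<^sub>R f s) \<in> borel_measurable lborel"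
    using mver_set_sub[OF assms(1), of "{0..T}"] by (simp add: set_borel_measurable_def)
  moreover have "AE s in lborel. norm (indicator {0..T} s *\<^sub>R f s) \<le> norm (indicator {0..T} s * B :: real)"
    using B(2) by eventually_elim (use B(1) in \<open>auto simp: indicator_def\<close>)
  ultimately show ?thesis unfolding set_integrable_def by (rule Bochner_Integration.integrable_bound)
qed

lemma lint_integral:
  fixes F :: "real \<Rightarrow> 'a::euclidean_space"
  assumes "set_integrable lborel {t..T} F"
  shows "(LINT r:{t..T}|lborel. F r) = integral {t..T} F" "F integrable_on {t..T}"
  using set_borel_integral_eq_integral[OF assms] by auto

lemma set_integrable_sub:
  fixes F :: "real \<Rightarrow> 'a::euclidean_space"
  assumes "set_integrable lborel {0..T} F" "0 \<le> t"
  shows "set_integrable lborel {t..T} F"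
  by (rule set_integrable_subset[OF assms(1)]) (use assms(2) in auto)

lemma set_integrable_meas:
  fixes F :: "real \<Rightarrow> 'a::euclidean_space"
  assumes "set_integrable lborel S F"
  shows "(\<lambda>s. indicator S s *\<^sub>R F s) \<in> borel_measurable lborel"
  using assms unfolding set_integrable_def by (rule borel_measurable_integrable)

lemma set_integrable_mver:
  fixes F :: "real \<Rightarrow> 'a::euclidean_space"
  assumes "set_integrable lborel {0..T} F"
  shows "mver T F"
  using set_integrable_meas[OF assms] by (intro mver_set) (simp add: set_borel_measurable_def)

lemma ode_cong:
  fixes F G :: "real \<Rightarrow> 'a::euclidean_space"
  assumes ode: "ode_solution T X F" and mG: "mver T G"
    and ae: "AE s in lborel. s \<in> {0..T} \<longrightarrow> F s = G s"
  shows "ode_solution T X G"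
proof -
  have FI: "set_integrable lborel {0..T} F" using ode unfolding ode_solution_def by blast
  have cX: "continuous_on {0..T} X" using ode unfolding ode_solution_def by blast
  have eq: "\<forall>t\<in>{0..T}. X t = X T - (LINT r:{t..T}|lborel. F r)"
    using ode unfolding ode_solution_def by blast
  have key: "set_integrable lborel S G \<and> (LINT r:S|lborel. F r) = (LINT r:S|lborel. G r)"
    if S1: "S \<subseteq> {0..T}" and S2: "S \<in> sets borel" and S3: "set_integrable lborel S F" for S
  proof -
    have m1: "(\<lambda>s. indicator S s *\<^sub>R F s) \<in> borel_measurable lborel" by (rule set_integrable_meas[OF S3])
    have m2: "(\<lambda>s. indicator S s *\<^sub>R G s) \<in> borel_measurable lborel"
      using mver_set_sub[OF mG S1 S2] unfolding set_borel_measurable_def .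
    have e: "AE s in lborel. indicator S s *\<^sub>R F s = indicator S s *\<^sub>R G s"
      using ae
    proof eventually_elim
      case (elim s)
      show ?case
      proof (cases "s \<in> S")
        case True
        then have "s \<in> {0..T}" using S1 by blast
        then show ?thesis using elim by simp
      qed simp
    qed
    have i1: "integrable lborel (\<lambda>s. indicator S s *\<^sub>R G s)"
      using integrable_cong_AE[OF m1 m2 e] S3 unfolding set_integrable_def by blast
    have i2: "integral\<^sup>L lborel (\<lambda>s. indicator S s *\<^sub>R F s) = integral\<^sup>L lborel (\<lambda>s. indicator S s *\<^sub>R G s)"
      by (rule integral_cong_AE[OF m1 m2 e])
    show ?thesis using i1 i2 unfolding set_integrable_def set_lebesgue_integral_def by blast
  qed
  have GI: "set_integrable lborel {0..T} G" using key[OF order_refl _ FI] by simp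
  have "\<forall>t\<in>{0..T}. X t = X T - (LINT r:{t..T}|lborel. G r)"
  proof
    fix t assume t: "t \<in> {0..T}"
    have I: "set_integrable lborel {t..T} F" using set_integrable_sub[OF FI] t by simp
    have sub: "{t..T} \<subseteq> {0..T}" using t by auto
    have "(LINT r:{t..T}|lborel. F r) = (LINT r:{t..T}|lborel. G r)"
      using key[OF sub _ I] by simp
    moreover have "X t = X T - (LINT r:{t..T}|lborel. F r)" using eq t by blast
    ultimately show "X t = X T - (LINT r:{t..T}|lborel. G r)" by simp
  qed
  then show ?thesis using cX GI unfolding ode_solution_def by blast
qed

lemma ode_continuous_from:
  fixes F :: "real \<Rightarrow> 'a::euclidean_space"
  assumes FI: "set_integrable lborel {0..T} F"
    and eq: "\<And>t. t \<in> {0..T} \<Longrightarrow> X t = c - (LINT r:{t..T}|lborel. F r)"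
  shows "continuous_on {0..T} X"
proof -
  have "F integrable_on {0..T}" using lint_integral(2)[OF FI] .
  then have "continuous_on {0..T} (\<lambda>t. integral {t..T} F)" by (rule indefinite_integral_continuous_1')
  then have "continuous_on {0..T} (\<lambda>t. c - integral {t..T} F)" by (intro continuous_intros)
  moreover have "X t = c - integral {t..T} F" if "t \<in> {0..T}" for t
    using eq[OF that] lint_integral(1)[OF set_integrable_sub[OF FI]] that by auto
  ultimately show ?thesis using continuous_on_cong[of "{0..T}" "{0..T}" X "\<lambda>t. c - integral {t..T} F"] by simp
qed

lemma chain_bound:
  fixes \<psi> :: "real \<Rightarrow> 'a::real_normed_vector" and N :: "real \<Rightarrow> real"
  assumes d: "d > 0" and tT: "t \<le> T"
    and H: "\<And>a b. t \<le> a \<Longrightarrow> a \<le> b \<Longrightarrow> b \<le> T \<Longrightarrow> b - a < d \<Longrightarrow> norm (\<psi> a - \<psi> b) \<le> e * (N a - N b)"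
  shows "norm (\<psi> t - \<psi> T) \<le> e * (N t - N T)"
proof -
  have "\<forall>u. t \<le> u \<longrightarrow> u \<le> T \<longrightarrow> T - u \<le> real m * (d/2) \<longrightarrow> norm (\<psi> u - \<psi> T) \<le> e * (N u - N T)" for m
  proof (induction m)
    case 0
    then show ?case by auto
  next
    case (Suc m)
    show ?case
    proof (intro allI impI)
      fix u assume u: "t \<le> u" "u \<le> T" "T - u \<le> real (Suc m) * (d/2)"
      show "norm (\<psi> u - \<psi> T) \<le> e * (N u - N T)"
      proof (cases "T - u < d")
        case True then show ?thesis using H[of u T] u by auto
      next
        case False
        let ?w = "u + d/2"
        have w: "t \<le> ?w" "?w \<le> T" "T - ?w \<le> real m * (d/2)" using u False d by (auto simp: field_simps)
        have "norm (\<psi> u - \<psi> T) \<le> norm (\<psi> u - \<psi> ?w) + norm (\<psi> ?w - \<psi> T)"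
          by (rule norm_diff_triangle_le[OF order_refl order_refl])
        also have "\<dots> \<le> e * (N u - N ?w) + e * (N ?w - N T)"
          using H[of u ?w] u d Suc.IH w by (intro add_mono) auto
        finally show ?thesis by (simp add: algebra_simps)
      qed
    qed
  qed
  moreover obtain m :: nat where "(T - t) / (d/2) < real m" using reals_Archimedean2 by blast
  then have "T - t \<le> real m * (d/2)" using d by (simp add: field_simps)
  ultimately show ?thesis using tT by auto
qed

lemma norm_mm3: "norm ((A::real^'n^'m) ** (B::real^'p^'n) ** (C::real^'q^'p)) \<le> norm A * norm B * norm C"
proof -
  have "norm (A ** B ** C) \<le> norm (A ** B) * norm C" by (rule norm_mm)
  also have "\<dots> \<le> norm A * norm B * norm C" by (intro mult_right_mono norm_mm norm_ge_zero)
  finally show ?thesis .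
qed

lemma ode_inverse:
  fixes X F :: "real \<Rightarrow> real^'n^'n"
  assumes ode: "ode_solution T X F" and inv: "\<And>s. s \<in> {0..T} \<Longrightarrow> invertible (X s)"
  shows "ode_solution T (\<lambda>s. matrix_inv (X s)) (\<lambda>s. - (matrix_inv (X s) ** F s ** matrix_inv (X s)))"
proof -
  define Y where "Y s = matrix_inv (X s)" for s
  have FI: "set_integrable lborel {0..T} F" using ode unfolding ode_solution_def by blast
  have cX: "continuous_on {0..T} X" using ode unfolding ode_solution_def by blast
  have eq: "\<And>t. t\<in>{0..T} \<Longrightarrow> X t = X T - (LINT r:{t..T}|lborel. F r)"
    using ode unfolding ode_solution_def by blast
  have cY: "continuous_on {0..T} Y"
    unfolding Y_def by (rule continuous_on_compose2[OF inv_continuous_on cX]) (auto simp: inv)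
  have "compact (Y ` {0..T})" using cY by (rule compact_continuous_image) simp
  then have "bounded (Y ` {0..T})" by (rule compact_imp_bounded)
  then obtain K0 where K0: "\<forall>x\<in>Y ` {0..T}. norm x \<le> K0" unfolding bounded_iff by blast
  define K where "K = max K0 0"
  have K: "K \<ge> 0" "\<And>s. s \<in> {0..T} \<Longrightarrow> norm (Y s) \<le> K"
    using K0 by (auto simp: K_def intro: le_max_iff_disj[THEN iffD2])
  define G where "G s = Y s ** F s ** Y s" for s
  have mF: "mver T F" by (rule set_integrable_mver[OF FI])
  have mG: "mver T G" unfolding G_def
    by (intro mver_mm mF mver_cont cY)
  have GI: "set_integrable lborel {0..T} G"
  proof -
    have "integrable lborel (\<lambda>s. (K * K) * (indicator {0..T} s *\<^sub>R norm (F s)))"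
      using set_integrable_norm[OF FI] unfolding set_integrable_def by (rule integrable_mult_right)
    moreover have "(\<lambda>s. indicator {0..T} s *\<^sub>R G s) \<in> borel_measurable lborel"
      using mver_set_sub[OF mG, of "{0..T}"] by (simp add: set_borel_measurable_def)
    moreover have "AE s in lborel. norm (indicator {0..T} s *\<^sub>R G s) \<le> norm ((K * K) * (indicator {0..T} s *\<^sub>R norm (F s)))"
    proof (rule AE_I2)
      fix s
      show "norm (indicator {0..T} s *\<^sub>R G s) \<le> norm ((K * K) * (indicator {0..T} s *\<^sub>R norm (F s)))"
      proof (cases "s \<in> {0..T}")
        case True
        have "norm (G s) \<le> norm (Y s) * norm (F s) * norm (Y s)" unfolding G_def
          by (rule norm_mm3)
        also have "\<dots> \<le> K * norm (F s) * K" using K True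
          by (intro mult_mono) (auto intro: mult_right_mono)
        finally show ?thesis using True K by (simp add: mult_ac)
      qed simp
    qed
    ultimately show ?thesis unfolding set_integrable_def by (rule Bochner_Integration.integrable_bound)
  qed
  have FIh: "F integrable_on {a..b}" if "0 \<le> a" "b \<le> T" for a b
    by (rule integrable_on_subinterval[OF lint_integral(2)[OF FI]]) (use that in auto)
  have GIh: "G integrable_on {a..b}" if "0 \<le> a" "b \<le> T" for a b
    by (rule integrable_on_subinterval[OF lint_integral(2)[OF GI]]) (use that in auto)
  have nFI: "set_integrable lborel {0..T} (\<lambda>r. norm (F r))" by (rule set_integrable_norm[OF FI])
  have nFIh: "(\<lambda>r. norm (F r)) integrable_on {a..b}" if "0 \<le> a" "b \<le> T" for a b
    by (rule integrable_on_subinterval[OF lint_integral(2)[OF nFI]]) (use that in auto)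
  define N where "N u = integral {u..T} (\<lambda>r. norm (F r))" for u
  have eqh: "X t = X T - integral {t..T} F" if "t \<in> {0..T}" for t
    using eq[OF that] lint_integral(1)[OF set_integrable_sub[OF FI]] that by auto
  define \<psi> where "\<psi> u = Y u - Y T - integral {u..T} G" for u
  have step: "norm (\<psi> a - \<psi> b) \<le> e * (N a - N b)"
    if ab: "0 \<le> a" "a \<le> b" "b \<le> T" and close: "\<And>r. r \<in> {a..b} \<Longrightarrow> norm (Y a - Y r) \<le> \<eta> \<and> norm (Y b - Y r) \<le> \<eta>"
      and eta: "2 * K * \<eta> \<le> e" "\<eta> \<ge> 0" for a b e \<eta>
  proof -
    have ia: "invertible (X a)" and ib: "invertible (X b)" using ab inv by auto
    have "X b - X a = integral {a..T} F - integral {b..T} F" using eqh[of a] eqh[of b] ab by simp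
    also have "integral {a..T} F = integral {a..b} F + integral {b..T} F"
      using Henstock_Kurzweil_Integration.integral_combine[where a=a and c=b and b=T and f=F] FIh[of a T] ab by simp
    finally have Xd: "X b - X a = integral {a..b} F" by simp
    have "Y a - Y b = Y a ** (X b - X a) ** Y b"
      by (simp add: Y_def mm_distrib inv_lr ia ib flip: matrix_mul_assoc)
    also have "\<dots> = integral {a..b} (\<lambda>r. Y a ** F r ** Y b)"
    proof -
      have bl: "bounded_linear (\<lambda>M. Y a ** M ** Y b)"
        by (rule bounded_linear_compose[OF bounded_bilinear.bounded_linear_left[OF bounded_bilinear_mm]
              bounded_bilinear.bounded_linear_right[OF bounded_bilinear_mm]])
      show ?thesis unfolding Xd using integral_linear[OF FIh[of a b] bl] ab by (simp add: o_def)
    qed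
    finally have Yd: "Y a - Y b = integral {a..b} (\<lambda>r. Y a ** F r ** Y b)" .
    have Gc: "integral {a..b} G + integral {b..T} G = integral {a..T} G"
      using Henstock_Kurzweil_Integration.integral_combine[where a=a and c=b and b=T and f=G] GIh[of a T] ab by simp
    have Gd: "integral {a..T} G - integral {b..T} G = integral {a..b} G"
      by (simp flip: Gc)
    have int1: "(\<lambda>r. Y a ** F r ** Y b) integrable_on {a..b}"
    proof -
      have bl: "bounded_linear (\<lambda>M. Y a ** M ** Y b)"
        by (rule bounded_linear_compose[OF bounded_bilinear.bounded_linear_left[OF bounded_bilinear_mm]
              bounded_bilinear.bounded_linear_right[OF bounded_bilinear_mm]])
      show ?thesis using integrable_linear[OF FIh[of a b] bl] ab by (simp add: o_def)
    qed
    have "\<psi> a - \<psi> b = integral {a..b} (\<lambda>r. Y a ** F r ** Y b - G r)"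
      unfolding \<psi>_def using Yd Gd integral_diff[OF int1 GIh[of a b]] ab by (simp add: algebra_simps)
    also have "norm \<dots> \<le> integral {a..b} (\<lambda>r. e * norm (F r))"
    proof (rule integral_norm_bound_integral)
      show "(\<lambda>r. Y a ** F r ** Y b - G r) integrable_on {a..b}"
        using int1 GIh[of a b] ab by (intro integrable_diff) auto
      show "(\<lambda>r. e * norm (F r)) integrable_on {a..b}"
        using integrable_on_cmult_left[OF nFIh[of a b], of e] ab by simp
      fix r assume r: "r \<in> {a..b}"
      have rT: "r \<in> {0..T}" using r ab by auto
      have "Y a ** F r ** Y b - G r = (Y a - Y r) ** F r ** Y b + Y r ** F r ** (Y b - Y r)"
        by (simp add: G_def mm_distrib)
      also have "norm \<dots> \<le> norm (Y a - Y r) * norm (F r) * norm (Y b) + norm (Y r) * norm (F r) * norm (Y b - Y r)"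
        by (intro norm_triangle_le add_mono norm_mm3)
      also have "\<dots> \<le> \<eta> * norm (F r) * K + K * norm (F r) * \<eta>"
        using close[OF r] K ab rT eta by (intro add_mono mult_mono) auto
      also have "\<dots> = (2 * K * \<eta>) * norm (F r)" by (simp add: algebra_simps)
      also have "\<dots> \<le> e * norm (F r)" using eta by (intro mult_right_mono) auto
      finally show "norm (Y a ** F r ** Y b - G r) \<le> e * norm (F r)" .
    qed
    also have "\<dots> = e * integral {a..b} (\<lambda>r. norm (F r))"
      using integral_mult[OF nFIh[of a b], of e] ab by simp
    also have "integral {a..b} (\<lambda>r. norm (F r)) = N a - N b"
      unfolding N_def using Henstock_Kurzweil_Integration.integral_combine[where a=a and c=b and b=T and f="\<lambda>r. norm (F r)"] nFIh[of a T] ab by simp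
    finally show ?thesis .
  qed
  have main: "\<psi> t = 0" if t: "t \<in> {0..T}" for t
  proof -
    have bound: "norm (\<psi> t) \<le> e * N t" if e: "e > 0" for e
    proof -
      define \<eta> where "\<eta> = e / (2 * K + 1)"
      have eta: "\<eta> > 0" "2 * K * \<eta> \<le> e" using e K by (auto simp: \<eta>_def field_simps)
      have "uniformly_continuous_on {0..T} Y" using cY by (rule compact_uniformly_continuous) simp
      then have "\<exists>d>0. \<forall>x\<in>{0..T}. \<forall>x'\<in>{0..T}. dist x' x < d \<longrightarrow> dist (Y x') (Y x) < \<eta>"
        unfolding uniformly_continuous_on_def using eta(1) by blast
      then obtain d where d: "d > 0" and dY: "\<And>x x'. x \<in> {0..T} \<Longrightarrow> x' \<in> {0..T} \<Longrightarrow> dist x' x < d \<Longrightarrow> dist (Y x') (Y x) < \<eta>"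
        by blast
      have "norm (\<psi> t - \<psi> T) \<le> e * (N t - N T)"
      proof (rule chain_bound[OF d])
        show "t \<le> T" using t by simp
        fix a b assume ab: "t \<le> a" "a \<le> b" "b \<le> T" "b - a < d"
        show "norm (\<psi> a - \<psi> b) \<le> e * (N a - N b)"
        proof (rule step)
          show "0 \<le> a" "a \<le> b" "b \<le> T" using ab t by auto
          show "2 * K * \<eta> \<le> e" "\<eta> \<ge> 0" using eta by auto
          fix r assume r: "r \<in> {a..b}"
          have "dist (Y a) (Y r) < \<eta>" using dY[of r a] r ab t by (auto simp: dist_real_def)
          moreover have "dist (Y b) (Y r) < \<eta>" using dY[of r b] r ab t by (auto simp: dist_real_def)
          ultimately show "norm (Y a - Y r) \<le> \<eta> \<and> norm (Y b - Y r) \<le> \<eta>" by (simp add: dist_norm)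
        qed
      qed
      moreover have "\<psi> T = 0" "N T = 0" by (simp_all add: \<psi>_def N_def)
      ultimately show ?thesis by simp
    qed
    have N0: "N t \<ge> 0" unfolding N_def using nFIh[of t T] t by (intro integral_nonneg) auto
    show ?thesis
    proof (rule ccontr)
      assume "\<psi> t \<noteq> 0"
      then have p: "norm (\<psi> t) > 0" by simp
      have "norm (\<psi> t) \<le> (norm (\<psi> t) / (2 * (N t + 1))) * N t" using bound[of "norm (\<psi> t) / (2 * (N t + 1))"] p N0 by simp
      also have "\<dots> < norm (\<psi> t)" using p N0
        by (simp add: field_simps, intro add_nonneg_pos mult_nonneg_nonneg) auto
      finally show False by simp
    qed
  qed
  have mGI: "set_integrable lborel {0..T} (\<lambda>s. - G s)"
    using GI unfolding set_integrable_def by (simp add: integrable_minus)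
  have "\<forall>t\<in>{0..T}. Y t = Y T - (LINT r:{t..T}|lborel. - G r)"
  proof
    fix t assume t: "t \<in> {0..T}"
    have "set_integrable lborel {t..T} G" using set_integrable_sub[OF GI] t by auto
    then have "(LINT r:{t..T}|lborel. - G r) = - integral {t..T} G"
      by (simp add: set_integral_uminus lint_integral(1))
    moreover have e1: "Y t - Y T - integral {t..T} G = 0" using main[OF t] unfolding \<psi>_def .
    ultimately show "Y t = Y T - (LINT r:{t..T}|lborel. - G r)"
      by (simp add: algebra_simps)
  qed
  then have "ode_solution T Y (\<lambda>s. - G s)" unfolding ode_solution_def using cY mGI by blast
  then show ?thesis unfolding Y_def G_def .
qed

definition rhsS :: "('n::finite,'m1::finite,'m2::finite) coef \<Rightarrow> real^'n^'n \<Rightarrow> real^'n^'n \<Rightarrow> real^'n^'n" where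
  "rhsS K X Sm = Ahat K ** X + X ** transpose (Ahat K) + X ** Gm K ** X - Sm
            - Fhat_op K X ** matrix_inv (That_op K X) ** X ** transpose (Fhat_op K X)
            - Hhat_op K X ** matrix_inv (T22 K) ** transpose (Hhat_op K X)"

definition rhsP :: "('n::finite,'m1::finite,'m2::finite) coef \<Rightarrow> real^'n^'n \<Rightarrow> real^'n^'n \<Rightarrow> real^'n^'n" where
  "rhsP K X Sm = - (X ** Ahat K) - transpose (Ahat K) ** X - Gm K
                 + transpose (transpose (Ftil K) ** X + S1til K)
                   ** matrix_inv (T11til K + X) ** (transpose (Ftil K) ** X + S1til K)
                 + transpose (transpose (Hhat K) ** X + Sm2 K)
                   ** matrix_inv (T22 K) ** (transpose (Hhat K) ** X + Sm2 K)
                 + Sm"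

lemma sandwich6:
  fixes X a1 a2 a3 a4 a5 a6 :: "real^'n^'n"
  shows "X ** (- a1 - a2 - a3 + a4 + a5 + a6) ** X =
    - (X ** a1 ** X) - (X ** a2 ** X) - (X ** a3 ** X) + X ** a4 ** X + X ** a5 ** X + X ** a6 ** X"
  by (simp only: mm_distrib)

lemma sw_left:
  assumes "(X::real^'n^'n) ** P = mat 1"
  shows "X ** (P ** (A::real^'n^'n)) ** X = A ** X"
proof -
  have "X ** (P ** A) ** X = (X ** P) ** A ** X" by (simp add: matrix_mul_assoc)
  then show ?thesis using assms by simp
qed

lemma sw_right:
  assumes "(P::real^'n^'n) ** X = mat 1"
  shows "X ** ((A::real^'n^'n) ** P) ** X = X ** A"
proof -
  have "X ** (A ** P) ** X = X ** A ** (P ** X)" by (simp add: matrix_mul_assoc)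
  then show ?thesis using assms by simp
qed

lemma sw_quad:
  fixes X P :: "real^'n^'n" and F :: "real^'k^'n" and S :: "real^'n^'k" and W :: "real^'k^'k"
  assumes XP: "X ** P = mat 1" and PX: "P ** X = mat 1" and sP: "symm P" and sX: "symm X"
  shows "X ** (transpose (transpose F ** P + S) ** W ** (transpose F ** P + S)) ** X
       = (F + X ** transpose S) ** W ** transpose (F + X ** transpose S)"
proof -
  have tP: "transpose P = P" and tX: "transpose X = X" using sP sX by (auto simp: symm_def)
  have l: "X ** transpose (transpose F ** P + S) = F + X ** transpose S"
  proof -
    have "X ** transpose (transpose F ** P + S) = X ** (P ** F + transpose S)"
      by (simp add: tr_distrib tP)
    also have "\<dots> = (X ** P) ** F + X ** transpose S" by (simp add: mm_distrib matrix_mul_assoc)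
    finally show ?thesis using XP by simp
  qed
  have r: "(transpose F ** P + S) ** X = transpose (F + X ** transpose S)"
  proof -
    have "(transpose F ** P + S) ** X = transpose F ** (P ** X) + S ** X"
      by (simp add: mm_distrib matrix_mul_assoc)
    also have "\<dots> = transpose F + S ** X" using PX by simp
    also have "\<dots> = transpose (F + X ** transpose S)" by (simp add: tr_distrib tX)
    finally show ?thesis .
  qed
  have "X ** (transpose (transpose F ** P + S) ** W ** (transpose F ** P + S)) ** X
      = (X ** transpose (transpose F ** P + S)) ** W ** ((transpose F ** P + S) ** X)"
    by (simp add: matrix_mul_assoc)
  then show ?thesis using l r by simp
qed

lemma sw_sum:
  fixes X P :: "real^'n^'n"
  assumes XP: "X ** P = mat 1" and PX: "P ** X = mat 1"
  shows "X ** (\<Sum>k\<in>S. g k *\<^sub>R (P ** Q k ** P)) ** X = (\<Sum>k\<in>S. g k *\<^sub>R Q k)"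
proof -
  have "X ** (P ** Q k ** P) ** X = Q k" for k
  proof -
    have "X ** (P ** Q k ** P) ** X = (X ** P) ** Q k ** (P ** X)" by (simp add: matrix_mul_assoc)
    then show ?thesis using XP PX by simp
  qed
  then show ?thesis by (simp add: mm_distrib)
qed

lemma That_inv:
  fixes P :: "real^'n^'n"
  assumes P: "posdef P" and iT: "invertible (P + T11til K)"
  shows "invertible (That_op K (matrix_inv P))"
    "matrix_inv (That_op K (matrix_inv P)) ** matrix_inv P = matrix_inv (P + T11til K)"
    "matrix_inv (That_op K (matrix_inv P)) = mat 1 - matrix_inv (P + T11til K) ** T11til K"
proof -
  let ?X = "matrix_inv P" and ?T = "T11til K"
  have iP: "invertible P" by (rule posdef_invertible[OF P])
  have iX: "invertible ?X" by (rule invertible_inv[OF iP])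
  have eq: "That_op K ?X = ?X ** (P + ?T)"
    by (simp add: That_op_def mm_distrib inv_lr iP matrix_mul_assoc)
  show inv: "invertible (That_op K ?X)" unfolding eq by (rule invertible_mult[OF iX iT])
  have mi: "matrix_inv (That_op K ?X) = matrix_inv (P + ?T) ** P"
    unfolding eq by (simp add: inv_mult iX iT inv_inv iP)
  show "matrix_inv (That_op K ?X) ** ?X = matrix_inv (P + ?T)"
    unfolding mi by (simp add: inv_lr iP flip: matrix_mul_assoc)
  have "matrix_inv (P + ?T) ** P = matrix_inv (P + ?T) ** ((P + ?T) - ?T)" by simp
  also have "\<dots> = mat 1 - matrix_inv (P + ?T) ** ?T" by (simp only: mm_diff_l inv_lr(1)[OF iT])
  finally show "matrix_inv (That_op K ?X) = mat 1 - matrix_inv (P + ?T) ** ?T" using mi by simp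
qed

lemma rhs_identity:
  fixes P :: "real^'n^'n"
  assumes P: "posdef P" and iT: "invertible (T11til K + P)"
  shows "- (matrix_inv P ** rhsP K P (\<Sum>k\<in>S. g k *\<^sub>R (P ** Q k ** P)) ** matrix_inv P)
         = rhsS K (matrix_inv P) (\<Sum>k\<in>S. g k *\<^sub>R Q k)"
proof -
  let ?X = "matrix_inv P"
  have iP: "invertible P" by (rule posdef_invertible[OF P])
  have XP: "?X ** P = mat 1" and PX: "P ** ?X = mat 1" using inv_lr[OF iP] by auto
  have sP: "symm P" using P posdef_def by blast
  have sX: "symm ?X" using psd_inv(2)[OF P] .
  have iT': "invertible (P + T11til K)" using iT by (simp add: add.commute)
  have W: "matrix_inv (T11til K + P) = matrix_inv (That_op K ?X) ** ?X"
    using That_inv(2)[OF P iT'] by (simp add: add.commute)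
  have "- (?X ** rhsP K P (\<Sum>k\<in>S. g k *\<^sub>R (P ** Q k ** P)) ** ?X)
      = - (- (?X ** (P ** Ahat K) ** ?X) - (?X ** (transpose (Ahat K) ** P) ** ?X) - (?X ** Gm K ** ?X)
          + ?X ** (transpose (transpose (Ftil K) ** P + S1til K)
                   ** matrix_inv (T11til K + P) ** (transpose (Ftil K) ** P + S1til K)) ** ?X
          + ?X ** (transpose (transpose (Hhat K) ** P + Sm2 K)
                   ** matrix_inv (T22 K) ** (transpose (Hhat K) ** P + Sm2 K)) ** ?X
          + ?X ** (\<Sum>k\<in>S. g k *\<^sub>R (P ** Q k ** P)) ** ?X)"
    unfolding rhsP_def by (simp only: sandwich6)
  also have "\<dots> = - (- (Ahat K ** ?X) - (?X ** transpose (Ahat K)) - (?X ** Gm K ** ?X)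
          + Fhat_op K ?X ** matrix_inv (That_op K ?X) ** ?X ** transpose (Fhat_op K ?X)
          + Hhat_op K ?X ** matrix_inv (T22 K) ** transpose (Hhat_op K ?X)
          + (\<Sum>k\<in>S. g k *\<^sub>R Q k))"
    unfolding sw_left[OF XP] sw_right[OF PX] sw_quad[OF XP PX sP sX] sw_sum[OF XP PX]
      Fhat_op_def Hhat_op_def W
    by (simp add: matrix_mul_assoc)
  also have "\<dots> = rhsS K ?X (\<Sum>k\<in>S. g k *\<^sub>R Q k)"
    unfolding rhsS_def by (simp add: algebra_simps)
  finally show ?thesis .
qed

lemma norm_mm4: "norm ((A::real^'n^'m) ** (B::real^'p^'n) ** (C::real^'q^'p) ** (D::real^'r^'q))
  \<le> norm A * norm B * norm C * norm D"
proof -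
  have "norm (A ** B ** C ** D) \<le> norm (A ** B ** C) * norm D" by (rule norm_mm)
  also have "\<dots> \<le> norm A * norm B * norm C * norm D" by (intro mult_right_mono norm_mm3 norm_ge_zero)
  finally show ?thesis .
qed

lemma rhsS_bound:
  fixes K :: "('n::finite,'m1::finite,'m2::finite) coef"
  assumes "norm (Ahat K) \<le> a" "norm (Gm K) \<le> g" "norm (Ftil K) \<le> f" "norm (S1til K) \<le> s1"
    "norm (Hhat K) \<le> h" "norm (Sm2 K) \<le> s2" "norm (matrix_inv (T22 K)) \<le> v"
    "norm (matrix_inv (That_op K X)) \<le> ti" "norm X \<le> x" "norm Sm \<le> sm"
  shows "norm (rhsS K X Sm) \<le> a * x + x * a + x * g * x + sm + (f + x * s1) * ti * x * (f + x * s1)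
           + (h + x * s2) * v * (h + x * s2)"
proof -
  have nn: "0 \<le> a" "0 \<le> g" "0 \<le> f" "0 \<le> s1" "0 \<le> h" "0 \<le> s2" "0 \<le> v" "0 \<le> ti" "0 \<le> x"
    using assms norm_ge_zero order_trans by blast+
  have fo: "norm (Fhat_op K X) \<le> f + x * s1"
  proof -
    have "norm (Fhat_op K X) \<le> norm (Ftil K) + norm (X ** transpose (S1til K))"
      unfolding Fhat_op_def by (rule norm_triangle_ineq)
    also have "norm (X ** transpose (S1til K)) \<le> norm X * norm (S1til K)"
      using norm_mm[of X "transpose (S1til K)"] by (simp add: norm_transpose)
    also have "norm X * norm (S1til K) \<le> x * s1" using assms nn by (intro mult_mono) auto
    finally show ?thesis using assms by simp
  qed
  have ho: "norm (Hhat_op K X) \<le> h + x * s2"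
  proof -
    have "norm (Hhat_op K X) \<le> norm (Hhat K) + norm (X ** transpose (Sm2 K))"
      unfolding Hhat_op_def by (rule norm_triangle_ineq)
    also have "norm (X ** transpose (Sm2 K)) \<le> norm X * norm (Sm2 K)"
      using norm_mm[of X "transpose (Sm2 K)"] by (simp add: norm_transpose)
    also have "norm X * norm (Sm2 K) \<le> x * s2" using assms nn by (intro mult_mono) auto
    finally show ?thesis using assms by simp
  qed
  have fon: "0 \<le> f + x * s1" "0 \<le> h + x * s2" using nn by auto
  have b1: "norm (Ahat K ** X) \<le> a * x"
    using norm_mm[of "Ahat K" X] assms nn by (meson mult_mono norm_ge_zero order_trans)
  have b2: "norm (X ** transpose (Ahat K)) \<le> x * a"
    using norm_mm[of X "transpose (Ahat K)"] assms nn
    by (simp add: norm_transpose) (meson mult_mono norm_ge_zero order_trans)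
  have b3: "norm (X ** Gm K ** X) \<le> x * g * x"
    using norm_mm3[of X "Gm K" X] assms nn
    by (meson mult_mono norm_ge_zero order_trans mult_nonneg_nonneg)
  have b5: "norm (Fhat_op K X ** matrix_inv (That_op K X) ** X ** transpose (Fhat_op K X))
      \<le> (f + x * s1) * ti * x * (f + x * s1)"
  proof -
    have "norm (Fhat_op K X ** matrix_inv (That_op K X) ** X ** transpose (Fhat_op K X))
       \<le> norm (Fhat_op K X) * norm (matrix_inv (That_op K X)) * norm X * norm (Fhat_op K X)"
      using norm_mm4[of "Fhat_op K X" "matrix_inv (That_op K X)" X "transpose (Fhat_op K X)"]
      by (simp add: norm_transpose)
    also have "\<dots> \<le> (f + x * s1) * ti * x * (f + x * s1)"
      using fo assms nn fon by (intro mult_mono mult_nonneg_nonneg) auto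
    finally show ?thesis .
  qed
  have b6: "norm (Hhat_op K X ** matrix_inv (T22 K) ** transpose (Hhat_op K X))
      \<le> (h + x * s2) * v * (h + x * s2)"
  proof -
    have "norm (Hhat_op K X ** matrix_inv (T22 K) ** transpose (Hhat_op K X))
       \<le> norm (Hhat_op K X) * norm (matrix_inv (T22 K)) * norm (Hhat_op K X)"
      using norm_mm3[of "Hhat_op K X" "matrix_inv (T22 K)" "transpose (Hhat_op K X)"]
      by (simp add: norm_transpose)
    also have "\<dots> \<le> (h + x * s2) * v * (h + x * s2)"
      using ho assms nn fon by (intro mult_mono mult_nonneg_nonneg) auto
    finally show ?thesis .
  qed
  show ?thesis unfolding rhsS_def
    by (intro order_trans[OF norm_triangle_ineq4] order_trans[OF norm_triangle_ineq] add_mono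
        b1 b2 b3 b5 b6 assms(10))
qed

lemmas mat_tendsto_intros = mm_tendsto tr_tendsto tendsto_add tendsto_diff tendsto_minus tendsto_const

lemma rhsS_tendsto:
  assumes X: "(Xn \<longlongrightarrow> X) F" and S: "(Sn \<longlongrightarrow> Sm) F" and inv: "invertible (That_op K X)"
  shows "((\<lambda>n. rhsS K (Xn n) (Sn n)) \<longlongrightarrow> rhsS K X Sm) F"
proof -
  have T: "((\<lambda>n. That_op K (Xn n)) \<longlongrightarrow> That_op K X) F"
    unfolding That_op_def by (intro mat_tendsto_intros X)
  have I: "((\<lambda>n. matrix_inv (That_op K (Xn n))) \<longlongrightarrow> matrix_inv (That_op K X)) F"
    by (rule isCont_tendsto_compose[OF inv_isCont[OF inv] T])
  show ?thesis unfolding rhsS_def Fhat_op_def Hhat_op_def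
    by (intro mat_tendsto_intros X S I)
qed

lemma coef_mver:
  fixes Kf :: "real \<Rightarrow> ('n::finite,'m1::finite,'m2::finite) coef"
  assumes "mver T (\<lambda>r. cA (Kf r))" "mver T (\<lambda>r. cB1 (Kf r))" "mver T (\<lambda>r. cB2 (Kf r))"
    "mver T (\<lambda>r. cC (Kf r))" "mver T (\<lambda>r. cD1 (Kf r))" "mver T (\<lambda>r. cD2 (Kf r))"
    "mver T (\<lambda>r. cR1 (Kf r))" "mver T (\<lambda>r. cR2 (Kf r))" "mver T (\<lambda>r. cP (Kf r))"
  shows "mver T (\<lambda>r. Ahat (Kf r))" "mver T (\<lambda>r. Gm (Kf r))" "mver T (\<lambda>r. Ftil (Kf r))"
    "mver T (\<lambda>r. S1til (Kf r))" "mver T (\<lambda>r. Hhat (Kf r))" "mver T (\<lambda>r. Sm2 (Kf r))"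
    "mver T (\<lambda>r. T11til (Kf r))" "mver T (\<lambda>r. T22 (Kf r))"
  unfolding Ahat_def Gm_def Ftil_def S1til_def Hhat_def Sm2_def T11til_def T22_def Chat_def
    S1hat_def R1hat_def Xi_def Sm1_def T11_def T12_def T21_def
  by (intro mver_mm mver_add mver_diff mver_tr mver_inv assms)+

lemma coef_ebdd:
  fixes Kf :: "real \<Rightarrow> ('n::finite,'m1::finite,'m2::finite) coef"
  assumes "ebdd T (\<lambda>r. cA (Kf r))" "ebdd T (\<lambda>r. cB1 (Kf r))" "ebdd T (\<lambda>r. cB2 (Kf r))"
    "ebdd T (\<lambda>r. cC (Kf r))" "ebdd T (\<lambda>r. cD1 (Kf r))" "ebdd T (\<lambda>r. cD2 (Kf r))"
    "ebdd T (\<lambda>r. cP (Kf r))" "ebdd T (\<lambda>r. matrix_inv (R1hat (Kf r)))"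
    "ebdd T (\<lambda>r. matrix_inv (T22 (Kf r)))"
  shows "ebdd T (\<lambda>r. Ahat (Kf r))" "ebdd T (\<lambda>r. Gm (Kf r))" "ebdd T (\<lambda>r. Ftil (Kf r))"
    "ebdd T (\<lambda>r. S1til (Kf r))" "ebdd T (\<lambda>r. Hhat (Kf r))" "ebdd T (\<lambda>r. Sm2 (Kf r))"
    "ebdd T (\<lambda>r. T11til (Kf r))"
  unfolding Ahat_def Gm_def Ftil_def S1til_def Hhat_def Sm2_def T11til_def Chat_def
    S1hat_def Xi_def Sm1_def T11_def T12_def T21_def
  by (intro ebdd_mm ebdd_add ebdd_diff ebdd_tr assms)+

lemma mver_rhsS:
  fixes Kf :: "real \<Rightarrow> ('n::finite,'m1::finite,'m2::finite) coef"
  assumes "mver T (\<lambda>r. Ahat (Kf r))" "mver T (\<lambda>r. Gm (Kf r))" "mver T (\<lambda>r. Ftil (Kf r))"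
    "mver T (\<lambda>r. S1til (Kf r))" "mver T (\<lambda>r. Hhat (Kf r))" "mver T (\<lambda>r. Sm2 (Kf r))"
    "mver T (\<lambda>r. T11til (Kf r))" "mver T (\<lambda>r. T22 (Kf r))" "mver T X" "mver T Sm"
  shows "mver T (\<lambda>r. rhsS (Kf r) (X r) (Sm r))"
  unfolding rhsS_def That_op_def Fhat_op_def Hhat_op_def
  by (intro mver_mm mver_add mver_diff mver_tr mver_inv mver_const assms)+

lemma ebdd_norm: "ebdd T f \<Longrightarrow> ebdd T (\<lambda>s. norm (f s))"
  unfolding ebdd_def by simp

lemma mver_lim:
  fixes f :: "nat \<Rightarrow> real \<Rightarrow> 'a::{real_normed_vector, second_countable_topology}"
  assumes m: "\<And>n. mver T (f n)" and c: "\<And>s. s \<in> {0..T} \<Longrightarrow> (\<lambda>n. f n s) \<longlonglongrightarrow> g s"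
  shows "mver T g"
proof -
  have mi: "(\<lambda>s. indicator {0..T} s *\<^sub>R f n s) \<in> borel_measurable lborel" for n
    using mver_set_sub[OF m[of n], of "{0..T}"] by (simp add: set_borel_measurable_def)
  have "(\<lambda>s. indicator {0..T} s *\<^sub>R g s) \<in> borel_measurable lborel"
  proof (rule borel_measurable_LIMSEQ_metric[OF mi])
    fix s
    show "(\<lambda>n. indicator {0..T} s *\<^sub>R f n s) \<longlonglongrightarrow> indicator {0..T} s *\<^sub>R g s"
    proof (cases "s \<in> {0..T}")
      case True then show ?thesis using c[OF True] by simp
    qed simp
  qed
  then show ?thesis by (intro mver_set) (simp add: set_borel_measurable_def)
qed

lemma dct_step:
  fixes Fn :: "nat \<Rightarrow> real \<Rightarrow> 'a::{banach, second_countable_topology}"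
  assumes mFn: "\<And>n. mver T (Fn n)" and mF: "mver T F"
    and conv: "AE r in lborel. r \<in> {0..T} \<longrightarrow> (\<lambda>n. Fn n r) \<longlonglongrightarrow> F r"
    and bound: "AE r in lborel. r \<in> {0..T} \<longrightarrow> (\<forall>n. norm (Fn n r) \<le> B)"
    and t: "0 \<le> t"
  shows "(\<lambda>n. LINT r:{t..T}|lborel. Fn n r) \<longlonglongrightarrow> (LINT r:{t..T}|lborel. F r)"
  unfolding set_lebesgue_integral_def
proof (rule integral_dominated_convergence[where w="\<lambda>r. indicator {0..T} r * B"])
  have sub: "{t..T} \<subseteq> {0..T}" using t by auto
  show "(\<lambda>r. indicator {t..T} r *\<^sub>R F r) \<in> borel_measurable lborel"
    using mver_set_sub[OF mF sub] by (simp add: set_borel_measurable_def)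
  show "(\<lambda>r. indicator {t..T} r *\<^sub>R Fn n r) \<in> borel_measurable lborel" for n
    using mver_set_sub[OF mFn sub] by (simp add: set_borel_measurable_def)
  show "integrable lborel (\<lambda>r. indicator {0..T} r * B)"
    by (intro integrable_mult_left integrable_real_indicator) (auto simp: emeasure_lborel_Icc_eq)
  show "AE r in lborel. (\<lambda>n. indicator {t..T} r *\<^sub>R Fn n r) \<longlonglongrightarrow> indicator {t..T} r *\<^sub>R F r"
    using conv
  proof eventually_elim
    case (elim r)
    show ?case
    proof (cases "r \<in> {t..T}")
      case True
      then have "r \<in> {0..T}" using sub by blast
      then show ?thesis using elim True by simp
    qed simp
  qed
  show "AE r in lborel. norm (indicator {t..T} r *\<^sub>R Fn n r) \<le> indicator {0..T} r * B" for n
    using bound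
  proof eventually_elim
    case (elim r)
    show ?case
    proof (cases "r \<in> {t..T}")
      case True
      then have "r \<in> {0..T}" using sub by blast
      then show ?thesis using elim True by simp
    next
      case False
      show ?thesis
      proof (cases "r \<in> {0..T}")
        case True
        then have "0 \<le> B" using elim norm_ge_zero order_trans by blast
        then show ?thesis using False True by simp
      qed (use False in simp)
    qed
  qed
qed

lemma bounded_linear_mv_left: "bounded_linear (\<lambda>M::real^'n^'m. M *v x)"
proof (rule bounded_linear_intro[of _ "norm x"])
  show "(M + N) *v x = M *v x + N *v x" for M N :: "real^'n^'m" by (simp add: matrix_vector_mult_add_rdistrib)
  show "(r *\<^sub>R M) *v x = r *\<^sub>R (M *v x)" for r and M :: "real^'n^'m" by (simp add: scaleR_matrix_vector_assoc)
  show "norm (M *v x) \<le> norm M * norm x" for M :: "real^'n^'m" by (rule norm_mv)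
qed

lemma pointwise_good:
  fixes Kr :: "('n::finite,'m1::finite,'m2::finite) coef" and Pn :: "nat \<Rightarrow> 's::finite \<Rightarrow> real^'n^'n"
    and Sigk :: "'s \<Rightarrow> real^'n^'n" and g :: "'s \<Rightarrow> real" and i :: 's
  assumes Ppos: "\<And>n k. posdef (Pn n k)" and Pmono: "\<And>n. psd (Pn n i - Pn 0 i)"
    and d: "\<delta> > 0" and dpos: "\<And>x. \<delta> * (x \<bullet> x) \<le> x \<bullet> ((Pn 0 i + T11til Kr) *v x)"
    and KX: "\<And>n k. norm (matrix_inv (Pn n k)) \<le> kx"
    and conv: "\<And>k. (\<lambda>n. matrix_inv (Pn n k)) \<longlonglongrightarrow> Sigk k"
    and cb: "norm (Ahat Kr) \<le> ca" "norm (Gm Kr) \<le> cg" "norm (Ftil Kr) \<le> cf" "norm (S1til Kr) \<le> cs1"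
      "norm (Hhat Kr) \<le> ch" "norm (Sm2 Kr) \<le> cs2" "norm (matrix_inv (T22 Kr)) \<le> cv"
      "norm (T11til Kr) \<le> ct" "\<And>k. \<bar>g k\<bar> \<le> cgen"
  assumes CT_def: "CT = real CARD('n) * (norm (mat 1 :: real^'n^'n) + real CARD('n) / \<delta> * ct)"
    and sm_def: "sm = real CARD('s) * cgen * kx"
    and Bnd_def: "Bnd = ca * kx + kx * ca + kx * cg * kx + sm + (cf + kx * cs1) * CT * kx * (cf + kx * cs1)
           + (ch + kx * cs2) * cv * (ch + kx * cs2)"
  shows "\<And>n. norm (rhsS Kr (matrix_inv (Pn n i)) (\<Sum>k\<in>UNIV. g k *\<^sub>R matrix_inv (Pn n k))) \<le> Bnd"
    "invertible (That_op Kr (Sigk i))" "norm (matrix_inv (That_op Kr (Sigk i))) \<le> CT"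
    "norm (rhsS Kr (Sigk i) (\<Sum>k\<in>UNIV. g k *\<^sub>R Sigk k)) \<le> Bnd"
    "(\<lambda>n. rhsS Kr (matrix_inv (Pn n i)) (\<Sum>k\<in>UNIV. g k *\<^sub>R matrix_inv (Pn n k)))
       \<longlonglongrightarrow> rhsS Kr (Sigk i) (\<Sum>k\<in>UNIV. g k *\<^sub>R Sigk k)"
proof -
  let ?T = "T11til Kr"
  define CT0 where "CT0 = norm (mat 1 :: real^'n^'n) + real CARD('n) / \<delta> * ct"
  have ct0: "0 \<le> ct" using cb(8) norm_ge_zero order_trans by blast
  have CT0p: "CT0 > 0" unfolding CT0_def using d ct0 mat1_neq0
    by (intro add_pos_nonneg mult_nonneg_nonneg) auto
  have CT0le: "CT0 \<le> CT" unfolding CT_def CT0_def[symmetric] using CT0p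
    by (simp add: mult_le_cancel_right1 less_imp_le)
  have inv_n: "invertible (Pn n i + ?T) \<and> norm (matrix_inv (Pn n i + ?T)) \<le> real CARD('n) / \<delta>" for n
  proof -
    have "\<delta> * (x \<bullet> x) \<le> x \<bullet> ((Pn n i + ?T) *v x)" for x
    proof -
      have "0 \<le> x \<bullet> ((Pn n i - Pn 0 i) *v x)" using Pmono[of n] by (simp add: psd_def)
      moreover have "(Pn n i + ?T) *v x = (Pn 0 i + ?T) *v x + (Pn n i - Pn 0 i) *v x"
        by (simp add: matrix_vector_mult_add_rdistrib matrix_vector_mult_diff_rdistrib)
      ultimately show ?thesis using dpos[of x] by (simp add: inner_add_right)
    qed
    then have "\<And>x. \<delta> * norm x \<le> norm ((Pn n i + ?T) *v x)" using pos_lower[OF d] by blast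
    from lower_bound_inv[OF d this] show ?thesis by blast
  qed
  have That_n: "invertible (That_op Kr (matrix_inv (Pn n i))) \<and> norm (matrix_inv (That_op Kr (matrix_inv (Pn n i)))) \<le> CT0" for n
  proof -
    have iv: "invertible (Pn n i + ?T)" using inv_n by blast
    have "matrix_inv (That_op Kr (matrix_inv (Pn n i))) = mat 1 - matrix_inv (Pn n i + ?T) ** ?T"
      by (rule That_inv(3)[OF Ppos iv])
    also have "norm \<dots> \<le> norm (mat 1 :: real^'n^'n) + norm (matrix_inv (Pn n i + ?T)) * norm ?T"
      by (intro order_trans[OF norm_triangle_ineq4] add_mono order_refl norm_mm)
    also have "\<dots> \<le> CT0" unfolding CT0_def using inv_n[of n] cb(8) d
      by (intro add_mono order_refl mult_mono) auto
    finally show ?thesis using That_inv(1)[OF Ppos iv] by blast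
  qed
  have low_n: "(1 / CT0) * norm x \<le> norm (That_op Kr (matrix_inv (Pn n i)) *v x)" for n x
  proof -
    let ?M = "That_op Kr (matrix_inv (Pn n i))"
    have "norm x = norm (matrix_inv ?M *v (?M *v x))"
      using That_n[of n] by (simp add: matrix_vector_mul_assoc inv_lr)
    also have "\<dots> \<le> norm (matrix_inv ?M) * norm (?M *v x)" by (rule norm_mv)
    also have "\<dots> \<le> CT0 * norm (?M *v x)" using That_n[of n] by (intro mult_right_mono) auto
    finally show ?thesis using CT0p by (simp add: field_simps)
  qed
  have ThatT: "(\<lambda>n. That_op Kr (matrix_inv (Pn n i))) \<longlonglongrightarrow> That_op Kr (Sigk i)"
    unfolding That_op_def by (intro mat_tendsto_intros conv)
  have low: "(1 / CT0) * norm x \<le> norm (That_op Kr (Sigk i) *v x)" for x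
  proof -
    have "(\<lambda>n. norm (That_op Kr (matrix_inv (Pn n i)) *v x)) \<longlonglongrightarrow> norm (That_op Kr (Sigk i) *v x)"
      by (intro tendsto_norm bounded_linear.tendsto[OF bounded_linear_mv_left ThatT])
    then show ?thesis using low_n by (intro LIMSEQ_le_const) auto
  qed
  have c1: "1 / CT0 > 0" using CT0p by simp
  note LB = lower_bound_inv[OF c1 low]
  show invS: "invertible (That_op Kr (Sigk i))" by (rule LB(1))
  show nS: "norm (matrix_inv (That_op Kr (Sigk i))) \<le> CT" using LB(3) by (simp add: CT_def CT0_def)
  have kx0: "0 \<le> kx" using KX[of 0 i] norm_ge_zero order_trans by blast
  have Sigb: "norm (Sigk k) \<le> kx" for k
    using tendsto_norm[OF conv[of k]] KX by (intro LIMSEQ_le_const2) auto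
  have smb: "norm (\<Sum>k\<in>UNIV. g k *\<^sub>R Z k) \<le> sm" if Z: "\<And>k. norm (Z k) \<le> kx" for Z :: "'s \<Rightarrow> real^'n^'n"
  proof -
    have "norm (\<Sum>k\<in>UNIV. g k *\<^sub>R Z k) \<le> (\<Sum>k\<in>UNIV. norm (g k *\<^sub>R Z k))" by (rule norm_sum)
    also have "\<dots> \<le> (\<Sum>k\<in>(UNIV::'s set). cgen * kx)"
    proof (rule sum_mono)
      fix k
      have cg0: "0 \<le> cgen" using cb(9)[of k] abs_ge_zero order_trans by blast
      have "\<bar>g k\<bar> * norm (Z k) \<le> cgen * kx" by (rule mult_mono) (use cb(9) Z cg0 in auto)
      then show "norm (g k *\<^sub>R Z k) \<le> cgen * kx" by simp
    qed
    finally show ?thesis by (simp add: sm_def)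
  qed
  show "norm (rhsS Kr (matrix_inv (Pn n i)) (\<Sum>k\<in>UNIV. g k *\<^sub>R matrix_inv (Pn n k))) \<le> Bnd" for n
    unfolding Bnd_def
    by (rule rhsS_bound[OF cb(1-7)]) (use That_n[of n] CT0le KX smb[OF KX] in auto)
  show "norm (rhsS Kr (Sigk i) (\<Sum>k\<in>UNIV. g k *\<^sub>R Sigk k)) \<le> Bnd"
    unfolding Bnd_def
    by (rule rhsS_bound[OF cb(1-7)]) (use nS Sigb smb[OF Sigb] in auto)
  show "(\<lambda>n. rhsS Kr (matrix_inv (Pn n i)) (\<Sum>k\<in>UNIV. g k *\<^sub>R matrix_inv (Pn n k)))
       \<longlonglongrightarrow> rhsS Kr (Sigk i) (\<Sum>k\<in>UNIV. g k *\<^sub>R Sigk k)"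
    by (rule rhsS_tendsto[OF conv _ invS]) (intro tendsto_sum tendsto_scaleR tendsto_const conv)
qed

theorem theorem5p1:
  fixes T :: real
    and gen :: "real \<Rightarrow> 's::finite \<Rightarrow> 's \<Rightarrow> real"
    and A C Q :: "real \<Rightarrow> 's \<Rightarrow> real^'n::finite^'n"
    and B1 D1 :: "real \<Rightarrow> 's \<Rightarrow> real^'m1::finite^'n"
    and B2 D2 :: "real \<Rightarrow> 's \<Rightarrow> real^'m2::finite^'n"
    and R1 :: "real \<Rightarrow> 's \<Rightarrow> real^'m1^'m1"
    and R2 :: "real \<Rightarrow> 's \<Rightarrow> real^'m2^'m2"
    and M :: "'s \<Rightarrow> real^'n^'n"
    and P :: "real \<Rightarrow> 's \<Rightarrow> real^'n^'n"
  assumes T_pos: "T > 0"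
    and gen_Linf: "\<And>i j. Linf T (\<lambda>s. gen s i j)"
    and gen_offdiag: "\<And>s i j. s \<in> {0..T} \<Longrightarrow> i \<noteq> j \<Longrightarrow> 0 \<le> gen s i j"
    and gen_rows: "\<And>s i. s \<in> {0..T} \<Longrightarrow> (\<Sum>j\<in>UNIV. gen s i j) = 0"
    and H1: "\<And>i. Linf T (\<lambda>s. A s i) \<and> Linf T (\<lambda>s. C s i) \<and> Linf T (\<lambda>s. B1 s i)
                 \<and> Linf T (\<lambda>s. D1 s i) \<and> Linf T (\<lambda>s. B2 s i) \<and> Linf T (\<lambda>s. D2 s i)"
    and H2: "\<And>i. Linf T (\<lambda>s. Q s i) \<and> Linf T (\<lambda>s. R1 s i) \<and> Linf T (\<lambda>s. R2 s i)
                 \<and> symm (M i)"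
    and H2_sym: "\<And>s i. s \<in> {0..T} \<Longrightarrow> symm (Q s i) \<and> symm (R1 s i) \<and> symm (R2 s i)"
    and P_follower: "\<And>i. (\<forall>s\<in>{0..T}. symm (P s i)) \<and> P T i = M i \<and>
          ode_solution T (\<lambda>s. P s i)
            (\<lambda>s. - (P s i ** A s i) - transpose (A s i) ** P s i
                 - transpose (C s i) ** P s i ** C s i
                 + transpose (S1hat (mk_coef A B1 B2 C D1 D2 R1 R2 P s i))
                   ** matrix_inv (R1hat (mk_coef A B1 B2 C D1 D2 R1 R2 P s i))
                   ** S1hat (mk_coef A B1 B2 C D1 D2 R1 R2 P s i)
                 - Q s i - (\<Sum>k\<in>UNIV. gen s i k *\<^sub>R P s k)) \<and>
          unif_pos T (\<lambda>s. R1hat (mk_coef A B1 B2 C D1 D2 R1 R2 P s i))"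
    and T22_pos: "\<And>i. unif_pos T (\<lambda>s. T22 (mk_coef A B1 B2 C D1 D2 R1 R2 P s i))"
    and main: "\<exists>lam0>0. \<exists>Pl :: real \<Rightarrow> real \<Rightarrow> 's \<Rightarrow> real^'n^'n.
       (\<forall>lam\<ge>lam0. \<forall>i.
          (\<forall>s\<in>{0..T}. posdef (Pl lam s i)) \<and> Pl lam T i = lam *\<^sub>R mat 1 \<and>
          ode_solution T (\<lambda>s. Pl lam s i)
            (\<lambda>s. let K = mk_coef A B1 B2 C D1 D2 R1 R2 P s i; X = Pl lam s i in
                 - (X ** Ahat K) - transpose (Ahat K) ** X - Gm K
                 + transpose (transpose (Ftil K) ** X + S1til K)
                   ** matrix_inv (T11til K + X) ** (transpose (Ftil K) ** X + S1til K)
                 + transpose (transpose (Hhat K) ** X + Sm2 K)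
                   ** matrix_inv (T22 K) ** (transpose (Hhat K) ** X + Sm2 K)
                 + (\<Sum>k\<in>UNIV. gen s i k *\<^sub>R (X ** matrix_inv (Pl lam s k) ** X))) \<and>
          unif_pos T (\<lambda>s. Pl lam s i + T11til (mk_coef A B1 B2 C D1 D2 R1 R2 P s i))) \<and>
       (\<forall>lam1 lam2 i. lam0 \<le> lam1 \<longrightarrow> lam1 < lam2 \<longrightarrow>
          (\<forall>s\<in>{0..T}. psd (Pl lam2 s i - Pl lam1 s i)))"
  shows "\<exists>Sig :: real \<Rightarrow> 's \<Rightarrow> real^'n^'n. \<forall>i.
     (\<forall>s\<in>{0..T}. psd (Sig s i)) \<and> Sig T i = 0 \<and>
     ode_solution T (\<lambda>s. Sig s i)
       (\<lambda>s. let K = mk_coef A B1 B2 C D1 D2 R1 R2 P s i; X = Sig s i in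
            Ahat K ** X + X ** transpose (Ahat K) + X ** Gm K ** X
            - (\<Sum>k\<in>UNIV. gen s i k *\<^sub>R Sig s k)
            - Fhat_op K X ** matrix_inv (That_op K X) ** X ** transpose (Fhat_op K X)
            - Hhat_op K X ** matrix_inv (T22 K) ** transpose (Hhat_op K X)) \<and>
     (AE s in lborel. s \<in> {0..T} \<longrightarrow>
        invertible (That_op (mk_coef A B1 B2 C D1 D2 R1 R2 P s i) (Sig s i))) \<and>
     Linf T (\<lambda>s. matrix_inv (That_op (mk_coef A B1 B2 C D1 D2 R1 R2 P s i) (Sig s i)))"
proof -
  from main obtain lam0 :: real and Pl :: "real \<Rightarrow> real \<Rightarrow> 's \<Rightarrow> real^'n^'n" where lam0: "lam0 > 0"
    and HP: "\<forall>lam\<ge>lam0. \<forall>i.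
          (\<forall>s\<in>{0..T}. posdef (Pl lam s i)) \<and> Pl lam T i = lam *\<^sub>R mat 1 \<and>
          ode_solution T (\<lambda>s. Pl lam s i)
            (\<lambda>s. let K = mk_coef A B1 B2 C D1 D2 R1 R2 P s i; X = Pl lam s i in
                 - (X ** Ahat K) - transpose (Ahat K) ** X - Gm K
                 + transpose (transpose (Ftil K) ** X + S1til K)
                   ** matrix_inv (T11til K + X) ** (transpose (Ftil K) ** X + S1til K)
                 + transpose (transpose (Hhat K) ** X + Sm2 K)
                   ** matrix_inv (T22 K) ** (transpose (Hhat K) ** X + Sm2 K)
                 + (\<Sum>k\<in>UNIV. gen s i k *\<^sub>R (X ** matrix_inv (Pl lam s k) ** X))) \<and>
          unif_pos T (\<lambda>s. Pl lam s i + T11til (mk_coef A B1 B2 C D1 D2 R1 R2 P s i))"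
    and HM: "\<forall>lam1 lam2 i. lam0 \<le> lam1 \<longrightarrow> lam1 < lam2 \<longrightarrow>
          (\<forall>s\<in>{0..T}. psd (Pl lam2 s i - Pl lam1 s i))"
    by blast
  define K where "K = mk_coef A B1 B2 C D1 D2 R1 R2 P"
  define Pn where "Pn n s i = Pl (lam0 + real n) s i" for n :: nat and s i
  define Sg where "Sg n s i = matrix_inv (Pn n s i)" for n :: nat and s i
  have Pinfo: "(\<forall>s\<in>{0..T}. posdef (Pn n s i)) \<and> Pn n T i = (lam0 + real n) *\<^sub>R mat 1 \<and>
       ode_solution T (\<lambda>s. Pn n s i) (\<lambda>s. rhsP (K s i) (Pn n s i)
          (\<Sum>k\<in>UNIV. gen s i k *\<^sub>R (Pn n s i ** matrix_inv (Pn n s k) ** Pn n s i))) \<and>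
       unif_pos T (\<lambda>s. Pn n s i + T11til (K s i))" for n i
  proof -
    have "lam0 + real n \<ge> lam0" by simp
    then have h: "(\<forall>s\<in>{0..T}. posdef (Pl (lam0 + real n) s i)) \<and> Pl (lam0 + real n) T i = (lam0 + real n) *\<^sub>R mat 1 \<and>
          ode_solution T (\<lambda>s. Pl (lam0 + real n) s i)
            (\<lambda>s. let K = mk_coef A B1 B2 C D1 D2 R1 R2 P s i; X = Pl (lam0 + real n) s i in
                 - (X ** Ahat K) - transpose (Ahat K) ** X - Gm K
                 + transpose (transpose (Ftil K) ** X + S1til K)
                   ** matrix_inv (T11til K + X) ** (transpose (Ftil K) ** X + S1til K)
                 + transpose (transpose (Hhat K) ** X + Sm2 K)
                   ** matrix_inv (T22 K) ** (transpose (Hhat K) ** X + Sm2 K)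
                 + (\<Sum>k\<in>UNIV. gen s i k *\<^sub>R (X ** matrix_inv (Pl (lam0 + real n) s k) ** X))) \<and>
          unif_pos T (\<lambda>s. Pl (lam0 + real n) s i + T11til (mk_coef A B1 B2 C D1 D2 R1 R2 P s i))"
      using HP by blast
    then show ?thesis unfolding Pn_def K_def rhsP_def Let_def .
  qed
  have Ppos: "posdef (Pn n s i)" if "s \<in> {0..T}" for n s i using Pinfo that by blast
  have PT: "Pn n T i = (lam0 + real n) *\<^sub>R mat 1" for n i using Pinfo by blast
  have Pode: "ode_solution T (\<lambda>s. Pn n s i) (\<lambda>s. rhsP (K s i) (Pn n s i)
          (\<Sum>k\<in>UNIV. gen s i k *\<^sub>R (Pn n s i ** matrix_inv (Pn n s k) ** Pn n s i)))" for n i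
    using Pinfo by blast
  have Pup: "unif_pos T (\<lambda>s. Pn n s i + T11til (K s i))" for n i using Pinfo by blast
  have Pmono: "psd (Pn (Suc n) s i - Pn n s i)" if "s \<in> {0..T}" for n s i
  proof -
    have "lam0 \<le> lam0 + real n" "lam0 + real n < lam0 + real (Suc n)" by auto
    then show ?thesis using HM that unfolding Pn_def by blast
  qed
  have Pmono0: "psd (Pn n s i - Pn 0 s i)" if "s \<in> {0..T}" for n s i
  proof (cases "n = 0")
    case True
    then show ?thesis by (simp add: psd_def symm_def transpose_def vec_eq_iff)
  next
    case False
    have "lam0 \<le> lam0 + real 0" "lam0 + real 0 < lam0 + real n" using False by auto
    then show ?thesis using HM that unfolding Pn_def by blast
  qed
  have Spsd: "psd (Sg n s i)" "symm (Sg n s i)" if "s \<in> {0..T}" for n s i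
    unfolding Sg_def using psd_inv[OF Ppos[OF that]] by auto
  have Sdec: "psd (Sg n s i - Sg (Suc n) s i)" if "s \<in> {0..T}" for n s i
    unfolding Sg_def by (rule psd_inv_antimono[OF Ppos[OF that] Ppos[OF that] Pmono[OF that]])
  have Sle0: "psd (Sg 0 s i - Sg n s i)" if "s \<in> {0..T}" for n s i
    unfolding Sg_def by (rule psd_inv_antimono[OF Ppos[OF that] Ppos[OF that] Pmono0[OF that]])
  have ST: "Sg n T i = (1 / (lam0 + real n)) *\<^sub>R mat 1" for n i
  proof -
    have "lam0 + real n \<noteq> 0" using lam0 by (smt (verit) of_nat_0_le_iff)
    then show ?thesis unfolding Sg_def PT by (rule inv_scale_id)
  qed
  have Sode0: "ode_solution T (\<lambda>s. Sg n s i) (\<lambda>s. - (Sg n s i ** rhsP (K s i) (Pn n s i)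
          (\<Sum>k\<in>UNIV. gen s i k *\<^sub>R (Pn n s i ** matrix_inv (Pn n s k) ** Pn n s i)) ** Sg n s i))" for n i
    unfolding Sg_def by (rule ode_inverse[OF Pode]) (rule posdef_invertible[OF Ppos])
  have cS: "continuous_on {0..T} (\<lambda>s. Sg n s i)" for n i
    using Sode0[of n i] unfolding ode_solution_def by blast
  have cP: "continuous_on {0..T} (\<lambda>s. P s i)" for i
    using P_follower[of i] unfolding ode_solution_def by blast
  have fields: "(\<lambda>r. cA (K r i)) = (\<lambda>r. A r i)" "(\<lambda>r. cB1 (K r i)) = (\<lambda>r. B1 r i)"
    "(\<lambda>r. cB2 (K r i)) = (\<lambda>r. B2 r i)" "(\<lambda>r. cC (K r i)) = (\<lambda>r. C r i)"
    "(\<lambda>r. cD1 (K r i)) = (\<lambda>r. D1 r i)" "(\<lambda>r. cD2 (K r i)) = (\<lambda>r. D2 r i)"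
    "(\<lambda>r. cR1 (K r i)) = (\<lambda>r. R1 r i)" "(\<lambda>r. cR2 (K r i)) = (\<lambda>r. R2 r i)"
    "(\<lambda>r. cP (K r i)) = (\<lambda>r. P r i)" for i
    by (simp_all add: K_def mk_coef_def)
  have mK: "mver T (\<lambda>r. Ahat (K r i)) \<and> mver T (\<lambda>r. Gm (K r i)) \<and> mver T (\<lambda>r. Ftil (K r i)) \<and>
    mver T (\<lambda>r. S1til (K r i)) \<and> mver T (\<lambda>r. Hhat (K r i)) \<and> mver T (\<lambda>r. Sm2 (K r i)) \<and>
    mver T (\<lambda>r. T11til (K r i)) \<and> mver T (\<lambda>r. T22 (K r i))" for i
  proof -
    have "mver T (\<lambda>r. cA (K r i))" "mver T (\<lambda>r. cB1 (K r i))" "mver T (\<lambda>r. cB2 (K r i))"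
      "mver T (\<lambda>r. cC (K r i))" "mver T (\<lambda>r. cD1 (K r i))" "mver T (\<lambda>r. cD2 (K r i))"
      "mver T (\<lambda>r. cR1 (K r i))" "mver T (\<lambda>r. cR2 (K r i))" "mver T (\<lambda>r. cP (K r i))"
      unfolding fields using H1[of i] H2[of i] Linf_mver mver_cont[OF cP] by auto
    note C = coef_mver[OF this]
    show ?thesis using C by blast
  qed
  have mSum: "mver T (\<lambda>r. \<Sum>k\<in>UNIV. gen r i k *\<^sub>R Z r k)" if "\<And>k. mver T (\<lambda>r. Z r k)" for i and Z :: "real \<Rightarrow> 's \<Rightarrow> real^'n^'n"
    by (intro mver_sum mver_scaleR Linf_mver[OF gen_Linf] that) simp
  have mRHS: "mver T (\<lambda>r. rhsS (K r i) (Z r i) (\<Sum>k\<in>UNIV. gen r i k *\<^sub>R Z r k))"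
    if "\<And>k. mver T (\<lambda>r. Z r k)" for i and Z :: "real \<Rightarrow> 's \<Rightarrow> real^'n^'n"
    using mK[of i] by (intro mver_rhsS mSum that) auto
  have mSg: "mver T (\<lambda>r. Sg n r k)" for n k by (rule mver_cont[OF cS])
  have Sode: "ode_solution T (\<lambda>s. Sg n s i) (\<lambda>s. rhsS (K s i) (Sg n s i) (\<Sum>k\<in>UNIV. gen s i k *\<^sub>R Sg n s k))" for n i
  proof (rule ode_cong[OF Sode0 mRHS[OF mSg]])
    show "AE s in lborel. s \<in> {0..T} \<longrightarrow>
      - (Sg n s i ** rhsP (K s i) (Pn n s i) (\<Sum>k\<in>UNIV. gen s i k *\<^sub>R (Pn n s i ** matrix_inv (Pn n s k) ** Pn n s i)) ** Sg n s i)
      = rhsS (K s i) (Sg n s i) (\<Sum>k\<in>UNIV. gen s i k *\<^sub>R Sg n s k)"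
      using unif_pos_inv(2)[OF Pup[of n i]]
    proof eventually_elim
      case (elim s)
      show ?case
      proof
        assume s: "s \<in> {0..T}"
        then have "invertible (T11til (K s i) + Pn n s i)" using elim by (simp add: add.commute)
        from rhs_identity[OF Ppos[OF s] this, where S=UNIV and g="gen s i" and Q="\<lambda>k. matrix_inv (Pn n s k)"]
        show "- (Sg n s i ** rhsP (K s i) (Pn n s i) (\<Sum>k\<in>UNIV. gen s i k *\<^sub>R (Pn n s i ** matrix_inv (Pn n s k) ** Pn n s i)) ** Sg n s i)
          = rhsS (K s i) (Sg n s i) (\<Sum>k\<in>UNIV. gen s i k *\<^sub>R Sg n s k)"
          unfolding Sg_def .
      qed
    qed
  qed
  define Sig where "Sig s i = lim (\<lambda>n. Sg n s i)" for s i
  have conv: "(\<lambda>n. Sg n s i) \<longlonglongrightarrow> Sig s i" if s: "s \<in> {0..T}" for s i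
  proof -
    obtain L where "(\<lambda>n. Sg n s i) \<longlonglongrightarrow> L"
      using psd_decseq_conv[of "\<lambda>n. Sg n s i"] Spsd(1)[OF s] Sdec[OF s] by blast
    then show ?thesis unfolding Sig_def by (simp add: limI)
  qed
  have SigT: "Sig T i = 0" for i
  proof -
    have "(\<lambda>n. Sg n T i) \<longlonglongrightarrow> Sig T i" using conv[of T i] T_pos by simp
    moreover have "(\<lambda>n. Sg n T i) \<longlonglongrightarrow> 0"
    proof -
      have "filterlim (\<lambda>n. lam0 + real n) at_top sequentially"
        by (rule filterlim_tendsto_add_at_top[OF tendsto_const filterlim_real_sequentially])
      then have "(\<lambda>n. inverse (lam0 + real n)) \<longlonglongrightarrow> 0" by (rule tendsto_inverse_0_at_top)
      then have "(\<lambda>n. inverse (lam0 + real n) *\<^sub>R (mat 1 :: real^'n^'n)) \<longlonglongrightarrow> 0 *\<^sub>R mat 1"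
        by (intro tendsto_scaleR tendsto_const)
      then show ?thesis unfolding ST by (simp add: divide_inverse)
    qed
    ultimately show ?thesis using LIMSEQ_unique by blast
  qed
  have Sigpsd: "psd (Sig s i)" if s: "s \<in> {0..T}" for s i
    unfolding psd_def
  proof (intro conjI allI)
    have "(\<lambda>n. transpose (Sg n s i)) \<longlonglongrightarrow> transpose (Sig s i)" by (intro tr_tendsto conv[OF s])
    moreover have "(\<lambda>n. transpose (Sg n s i)) = (\<lambda>n. Sg n s i)"
      using Spsd(2)[OF s] by (simp add: symm_def)
    ultimately have "transpose (Sig s i) = Sig s i" using conv[OF s] LIMSEQ_unique by metis
    then show "symm (Sig s i)" by (simp add: symm_def)
    fix x
    have "(\<lambda>n. x \<bullet> (Sg n s i *v x)) \<longlonglongrightarrow> x \<bullet> (Sig s i *v x)"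
      by (intro tendsto_inner tendsto_const bounded_linear.tendsto[OF bounded_linear_mv_left] conv[OF s])
    moreover have "\<forall>n. 0 \<le> x \<bullet> (Sg n s i *v x)" using Spsd(1)[OF s] by (simp add: psd_def)
    ultimately show "0 \<le> x \<bullet> (Sig s i *v x)" by (intro LIMSEQ_le_const) auto
  qed
  have mSig: "mver T (\<lambda>r. Sig r k)" for k by (rule mver_lim[OF mSg conv])
  obtain K0 where K0: "\<And>s k. s \<in> {0..T} \<Longrightarrow> norm (Sg 0 s k) \<le> K0"
  proof -
    have "continuous_on {0..T} (\<lambda>s. \<Sum>k\<in>UNIV. norm (Sg 0 s k))"
      by (intro continuous_on_sum continuous_on_norm cS)
    then have "compact ((\<lambda>s. \<Sum>k\<in>UNIV. norm (Sg 0 s k)) ` {0..T})"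
      by (rule compact_continuous_image) simp
    then have "bounded ((\<lambda>s. \<Sum>k\<in>UNIV. norm (Sg 0 s k)) ` {0..T})" by (rule compact_imp_bounded)
    then obtain B where B: "\<forall>x\<in>(\<lambda>s. \<Sum>k\<in>UNIV. norm (Sg 0 s k)) ` {0..T}. norm x \<le> B"
      unfolding bounded_iff by blast
    have "norm (Sg 0 s k) \<le> B" if "s \<in> {0..T}" for s k
    proof -
      have "norm (Sg 0 s k) \<le> (\<Sum>k\<in>UNIV. norm (Sg 0 s k))"
        by (rule member_le_sum) auto
      also have "\<dots> \<le> norm (\<Sum>k\<in>UNIV. norm (Sg 0 s k))" by simp
      also have "\<dots> \<le> B" using B that by blast
      finally show ?thesis .
    qed
    then show ?thesis using that by blast
  qed
  define KX where "KX = real CARD('n) * real CARD('n) * K0"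
  have KXb: "norm (Sg n s k) \<le> KX" if "s \<in> {0..T}" for n s k
  proof -
    have "norm (Sg n s k) \<le> real CARD('n) * real CARD('n) * norm (Sg 0 s k)"
      by (rule psd_le_norm[OF Spsd(1)[OF that] Sle0[OF that]])
    also have "\<dots> \<le> KX" unfolding KX_def using K0[OF that] by (intro mult_left_mono) auto
    finally show ?thesis .
  qed
  have perI: "\<exists>B CT. AE r in lborel. r \<in> {0..T} \<longrightarrow>
      (\<forall>n. norm (rhsS (K r i) (Sg n r i) (\<Sum>k\<in>UNIV. gen r i k *\<^sub>R Sg n r k)) \<le> B) \<and>
      invertible (That_op (K r i) (Sig r i)) \<and> norm (matrix_inv (That_op (K r i) (Sig r i))) \<le> CT \<and>
      norm (rhsS (K r i) (Sig r i) (\<Sum>k\<in>UNIV. gen r i k *\<^sub>R Sig r k)) \<le> B \<and>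
      (\<lambda>n. rhsS (K r i) (Sg n r i) (\<Sum>k\<in>UNIV. gen r i k *\<^sub>R Sg n r k))
         \<longlonglongrightarrow> rhsS (K r i) (Sig r i) (\<Sum>k\<in>UNIV. gen r i k *\<^sub>R Sig r k)" for i
  proof -
    have eK: "ebdd T (\<lambda>r. cA (K r i))" "ebdd T (\<lambda>r. cB1 (K r i))" "ebdd T (\<lambda>r. cB2 (K r i))"
      "ebdd T (\<lambda>r. cC (K r i))" "ebdd T (\<lambda>r. cD1 (K r i))" "ebdd T (\<lambda>r. cD2 (K r i))"
      "ebdd T (\<lambda>r. cP (K r i))"
      unfolding fields using H1[of i] Linf_ebdd ebdd_cont[OF cP] by auto
    have eR1: "ebdd T (\<lambda>r. matrix_inv (R1hat (K r i)))"
      using unif_pos_inv(1)[of T "\<lambda>r. R1hat (K r i)"] P_follower[of i] unfolding K_def by blast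
    have eT22: "ebdd T (\<lambda>r. matrix_inv (T22 (K r i)))"
      using unif_pos_inv(1)[OF T22_pos[of i]] unfolding K_def by blast
    note EC = coef_ebdd[OF eK eR1 eT22]
    have eg: "ebdd T (\<lambda>r. \<Sum>k\<in>UNIV. norm (gen r i k))"
      by (intro ebdd_sum ebdd_norm Linf_ebdd[OF gen_Linf]) simp
    obtain ca where ca: "AE r in lborel. r \<in> {0..T} \<longrightarrow> norm (Ahat (K r i)) \<le> ca" using EC(1) ebddE by blast
    obtain cg where cg: "AE r in lborel. r \<in> {0..T} \<longrightarrow> norm (Gm (K r i)) \<le> cg" using EC(2) ebddE by blast
    obtain cf where cf: "AE r in lborel. r \<in> {0..T} \<longrightarrow> norm (Ftil (K r i)) \<le> cf" using EC(3) ebddE by blast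
    obtain cs1 where cs1: "AE r in lborel. r \<in> {0..T} \<longrightarrow> norm (S1til (K r i)) \<le> cs1" using EC(4) ebddE by blast
    obtain ch where ch: "AE r in lborel. r \<in> {0..T} \<longrightarrow> norm (Hhat (K r i)) \<le> ch" using EC(5) ebddE by blast
    obtain cs2 where cs2: "AE r in lborel. r \<in> {0..T} \<longrightarrow> norm (Sm2 (K r i)) \<le> cs2" using EC(6) ebddE by blast
    obtain ct where ct: "AE r in lborel. r \<in> {0..T} \<longrightarrow> norm (T11til (K r i)) \<le> ct" using EC(7) ebddE by blast
    obtain cv where cv: "AE r in lborel. r \<in> {0..T} \<longrightarrow> norm (matrix_inv (T22 (K r i))) \<le> cv" using eT22 ebddE by blast
    obtain cgen where cgen: "AE r in lborel. r \<in> {0..T} \<longrightarrow> norm (\<Sum>k\<in>UNIV. norm (gen r i k)) \<le> cgen" using eg ebddE by blast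
    obtain \<delta> where d: "\<delta> > 0" and dpos: "AE r in lborel. r \<in> {0..T} \<longrightarrow>
        (\<forall>x. \<delta> * (x \<bullet> x) \<le> x \<bullet> ((Pn 0 r i + T11til (K r i)) *v x))"
      using Pup[of 0 i] unfolding unif_pos_def by blast
    define CT where "CT = real CARD('n) * (norm (mat 1 :: real^'n^'n) + real CARD('n) / \<delta> * ct)"
    define sm where "sm = real CARD('s) * cgen * KX"
    define Bnd where "Bnd = ca * KX + KX * ca + KX * cg * KX + sm + (cf + KX * cs1) * CT * KX * (cf + KX * cs1)
           + (ch + KX * cs2) * cv * (ch + KX * cs2)"
    have "AE r in lborel. r \<in> {0..T} \<longrightarrow>
      (\<forall>n. norm (rhsS (K r i) (Sg n r i) (\<Sum>k\<in>UNIV. gen r i k *\<^sub>R Sg n r k)) \<le> Bnd) \<and>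
      invertible (That_op (K r i) (Sig r i)) \<and> norm (matrix_inv (That_op (K r i) (Sig r i))) \<le> CT \<and>
      norm (rhsS (K r i) (Sig r i) (\<Sum>k\<in>UNIV. gen r i k *\<^sub>R Sig r k)) \<le> Bnd \<and>
      (\<lambda>n. rhsS (K r i) (Sg n r i) (\<Sum>k\<in>UNIV. gen r i k *\<^sub>R Sg n r k))
         \<longlonglongrightarrow> rhsS (K r i) (Sig r i) (\<Sum>k\<in>UNIV. gen r i k *\<^sub>R Sig r k)"
      using ca cg cf cs1 ch cs2 ct cv cgen dpos
    proof eventually_elim
      case (elim r)
      show ?case
      proof
        assume r: "r \<in> {0..T}"
        have gb: "\<bar>gen r i k\<bar> \<le> cgen" for k
        proof -
          have "\<bar>gen r i k\<bar> \<le> (\<Sum>k\<in>UNIV. \<bar>gen r i k\<bar>)" by (rule member_le_sum) auto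
          also have "\<dots> \<le> cgen" using elim r by simp
          finally show ?thesis .
        qed
        note PG = pointwise_good[where Kr="K r i" and Pn="\<lambda>n k. Pn n r k" and Sigk="\<lambda>k. Sig r k"
            and g="\<lambda>k. gen r i k" and i=i and \<delta>=\<delta> and kx=KX,
            OF Ppos[OF r] Pmono0[OF r] d _ KXb[OF r, unfolded Sg_def] conv[OF r, unfolded Sg_def]
            _ _ _ _ _ _ _ _ gb CT_def sm_def Bnd_def]
        show "(\<forall>n. norm (rhsS (K r i) (Sg n r i) (\<Sum>k\<in>UNIV. gen r i k *\<^sub>R Sg n r k)) \<le> Bnd) \<and>
          invertible (That_op (K r i) (Sig r i)) \<and> norm (matrix_inv (That_op (K r i) (Sig r i))) \<le> CT \<and>
          norm (rhsS (K r i) (Sig r i) (\<Sum>k\<in>UNIV. gen r i k *\<^sub>R Sig r k)) \<le> Bnd \<and>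
          (\<lambda>n. rhsS (K r i) (Sg n r i) (\<Sum>k\<in>UNIV. gen r i k *\<^sub>R Sg n r k))
             \<longlonglongrightarrow> rhsS (K r i) (Sig r i) (\<Sum>k\<in>UNIV. gen r i k *\<^sub>R Sig r k)"
          unfolding Sg_def using PG elim r by auto
      qed
    qed
    then show ?thesis by blast
  qed
  show ?thesis
  proof (intro exI[of _ Sig] allI conjI)
    fix i
    obtain B CT where G: "AE r in lborel. r \<in> {0..T} \<longrightarrow>
      (\<forall>n. norm (rhsS (K r i) (Sg n r i) (\<Sum>k\<in>UNIV. gen r i k *\<^sub>R Sg n r k)) \<le> B) \<and>
      invertible (That_op (K r i) (Sig r i)) \<and> norm (matrix_inv (That_op (K r i) (Sig r i))) \<le> CT \<and>
      norm (rhsS (K r i) (Sig r i) (\<Sum>k\<in>UNIV. gen r i k *\<^sub>R Sig r k)) \<le> B \<and>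
      (\<lambda>n. rhsS (K r i) (Sg n r i) (\<Sum>k\<in>UNIV. gen r i k *\<^sub>R Sg n r k))
         \<longlonglongrightarrow> rhsS (K r i) (Sig r i) (\<Sum>k\<in>UNIV. gen r i k *\<^sub>R Sig r k)"
      using perI[of i] by blast
    show "\<forall>s\<in>{0..T}. psd (Sig s i)" using Sigpsd by blast
    show "Sig T i = 0" by (rule SigT)
    let ?F = "\<lambda>r. rhsS (K r i) (Sig r i) (\<Sum>k\<in>UNIV. gen r i k *\<^sub>R Sig r k)"
    let ?Fn = "\<lambda>n r. rhsS (K r i) (Sg n r i) (\<Sum>k\<in>UNIV. gen r i k *\<^sub>R Sg n r k)"
    have mF: "mver T ?F" by (rule mRHS[OF mSig])
    have mFn: "mver T (?Fn n)" for n by (rule mRHS[OF mSg])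
    have FI: "set_integrable lborel {0..T} ?F"
    proof (rule mver_ebdd_integrable[OF mF])
      show "ebdd T ?F" by (rule ebddI[of _ _ B]) (use G in eventually_elim, auto)
    qed
    have eqt: "Sig t i = Sig T i - (LINT r:{t..T}|lborel. ?F r)" if t: "t \<in> {0..T}" for t
    proof -
      have l1: "(\<lambda>n. LINT r:{t..T}|lborel. ?Fn n r) \<longlonglongrightarrow> (LINT r:{t..T}|lborel. ?F r)"
      proof (rule dct_step[OF mFn mF])
        show "AE r in lborel. r \<in> {0..T} \<longrightarrow> (\<lambda>n. ?Fn n r) \<longlonglongrightarrow> ?F r" using G by eventually_elim auto
        show "AE r in lborel. r \<in> {0..T} \<longrightarrow> (\<forall>n. norm (?Fn n r) \<le> B)" using G by eventually_elim auto
        show "0 \<le> t" using t by simp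
      qed
      have e: "(LINT r:{t..T}|lborel. ?Fn n r) = Sg n T i - Sg n t i" for n
      proof -
        have "Sg n t i = Sg n T i - (LINT r:{t..T}|lborel. ?Fn n r)"
          using Sode[of n i] t unfolding ode_solution_def by blast
        then show ?thesis by simp
      qed
      have "(\<lambda>n. Sg n T i - Sg n t i) \<longlonglongrightarrow> Sig T i - Sig t i"
        using conv[of T i] conv[OF t, of i] T_pos by (intro tendsto_diff) auto
      then have "(\<lambda>n. LINT r:{t..T}|lborel. ?Fn n r) \<longlonglongrightarrow> Sig T i - Sig t i" unfolding e .
      then have "(LINT r:{t..T}|lborel. ?F r) = Sig T i - Sig t i" using l1 LIMSEQ_unique by blast
      then show ?thesis by simp
    qed
    have cSig: "continuous_on {0..T} (\<lambda>s. Sig s i)"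
      by (rule ode_continuous_from[OF FI eqt])
    have "ode_solution T (\<lambda>s. Sig s i) ?F"
      unfolding ode_solution_def using cSig FI eqt by blast
    then show "ode_solution T (\<lambda>s. Sig s i)
       (\<lambda>s. let K = mk_coef A B1 B2 C D1 D2 R1 R2 P s i; X = Sig s i in
            Ahat K ** X + X ** transpose (Ahat K) + X ** Gm K ** X
            - (\<Sum>k\<in>UNIV. gen s i k *\<^sub>R Sig s k)
            - Fhat_op K X ** matrix_inv (That_op K X) ** X ** transpose (Fhat_op K X)
            - Hhat_op K X ** matrix_inv (T22 K) ** transpose (Hhat_op K X))"
      unfolding Let_def rhsS_def K_def .
    show "AE s in lborel. s \<in> {0..T} \<longrightarrow>
        invertible (That_op (mk_coef A B1 B2 C D1 D2 R1 R2 P s i) (Sig s i))"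
      using G unfolding K_def by eventually_elim auto
    show "Linf T (\<lambda>s. matrix_inv (That_op (mk_coef A B1 B2 C D1 D2 R1 R2 P s i) (Sig s i)))"
      unfolding Linf_def
    proof
      have "mver T (\<lambda>s. matrix_inv (That_op (K s i) (Sig s i)))"
        unfolding That_op_def using mK[of i] by (intro mver_inv mver_add mver_const mver_mm mSig) auto
      then show "set_borel_measurable lborel {0..T} (\<lambda>s. matrix_inv (That_op (mk_coef A B1 B2 C D1 D2 R1 R2 P s i) (Sig s i)))"
        unfolding K_def by (rule mver_set_sub) auto
      have "AE s in lborel. s \<in> {0..T} \<longrightarrow> norm (matrix_inv (That_op (K s i) (Sig s i))) \<le> CT"
        using G by eventually_elim auto
      then show "\<exists>B. AE s in lborel. s \<in> {0..T} \<longrightarrow> norm (matrix_inv (That_op (mk_coef A B1 B2 C D1 D2 R1 R2 P s i) (Sig s i))) \<le> B"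
        unfolding K_def by blast
    qed
  qed
qed

end
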